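(* Consider a solution $(s(t),x(t),o(t))$, $t\ge0$, of the networked SIR epidemic-opinion model described in the context, under the standing assumption stated there. Then the solution converges to an equilibrium of the form $(s_e,\mathbf 0,(\bar L+I_n)^{-1}(\mathbf 1_n-s_e))$ for some $s_e\in[0,1]^n$, and the convergence is exponentially fast.
   Context: There are $n$ communities. For $t\ge0$ and $i\in[n]$, $s_i(t),x_i(t),o_i(t)\in[0,1]$ denote the susceptible proportion, infected proportion and opinion of community $i$. The disease transmission network is a directed graph $\mathcal G=(\mathcal V,\mathcal E)$ on $n$ nodes with edge weights $\beta_{ij}>0$ if $(v_j,v_i)\in\mathcal E$ (and $\beta_{ij}=0$ otherwise); $\mathcal N_i=\{v_j:(v_j,v_i)\in\mathcal E\}$. The opinion network is a directed graph $\bar{\mathcal G}$ on the same nodes with nonnegative weights $\bar a_{ij}$ and Laplacian $\bar L=\mathrm{diag}(k_1,\dots,k_n)-\bar A$, $[\bar A]_{ij}=\bar a_{ij}$, $k_i=\sum_j\bar a_{ij}$. The model is $\dot s_i=-s_i\sum_{j\in\mathcal N_i}\big(\beta_{ij}-(\beta_{ij}-\beta_{\min})o_i\big)x_j$, $\dot x_i=s_i\sum_{j\in\mathcal N_i}\big(\beta_{ij}-(\beta_{ij}-\beta_{\min})o_i\big)x_j-\big(\gamma_{\min}+(\gamma_i-\gamma_{\min})o_i\big)x_i$, $\dot o=(\mathbf 1_n-s)-(\bar L+I_n)o$. Standing assumption: for all $i$, $s_i(0),x_i(0),o_i(0)\in[0,1]$ with $s_i(0)+x_i(0)\le1$, $\gamma_i\ge\gamma_{\min}>0$,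 $\beta_{ij}\ge\beta_{\min}>0$ for all $j\in\mathcal N_i$, and $\mathcal G$, $\bar{\mathcal G}$ strongly connected. *)

theory Defs
  imports "HOL-Analysis.Analysis"
begin

definition edge_rel :: "('n \<Rightarrow> 'n \<Rightarrow> real) \<Rightarrow> ('n \<times> 'n) set" where
  "edge_rel w = {(j, i). w i j > 0}"

definition strongly_connected :: "('n \<Rightarrow> 'n \<Rightarrow> real) \<Rightarrow> bool" where
  "strongly_connected w \<longleftrightarrow> (\<forall>i j. (i, j) \<in> (edge_rel w)\<^sup>*)"

definition nbrs :: "('n \<Rightarrow> 'n \<Rightarrow> real) \<Rightarrow> 'n \<Rightarrow> 'n set" where
  "nbrs w i = {j. w i j > 0}"

definition laplacian :: "('n::finite \<Rightarrow> 'n \<Rightarrow> real) \<Rightarrow> real^'n^'n" where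
  "laplacian a = (\<chi> i j. (if i = j then (\<Sum>k\<in>UNIV. a i k) else 0) - a i j)"

end

theory Submission
  imports Defs
begin



lemma vd_comp:
  assumes "(f has_vector_derivative D) (at t within S)"
  shows "((\<lambda>t. f t $ i) has_real_derivative (D $ i)) (at t within S)"
proof -
  have "((\<lambda>t. f t $ i) has_derivative (\<lambda>x. (x *\<^sub>R D) $ i)) (at t within S)"
    using bounded_linear.has_derivative[OF bounded_linear_vec_nth assms[unfolded has_vector_derivative_def]] .
  then show ?thesis unfolding has_field_derivative_def
    by (rule has_derivative_eq_rhs) (auto simp: fun_eq_iff)
qed

lemma vd_cont:
  assumes "\<And>t. t \<ge> a \<Longrightarrow> (f has_vector_derivative D t) (at t within {a..})"
  shows "continuous_on {a..} f"
  using assms by (meson atLeast_iff continuous_on_eq_continuous_within has_vector_derivative_continuous)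

lemma exp_der: "((\<lambda>t. c * exp (l * (t - a))) has_real_derivative (c * (l * exp (l * (t - a))))) (at t within S)"
  by (auto intro!: derivative_eq_intros)

lemma positivity:
  fixes y y' :: "real \<Rightarrow> real^'n::finite" and P :: "real \<Rightarrow> 'n \<Rightarrow> 'n \<Rightarrow> real"
  assumes cont: "\<And>i j. continuous_on {a..} (\<lambda>t. P t i j)"
    and offd: "\<And>t i j. t \<ge> a \<Longrightarrow> i \<noteq> j \<Longrightarrow> P t i j \<ge> 0"
    and der: "\<And>t. t \<ge> a \<Longrightarrow> (y has_vector_derivative y' t) (at t within {a..})"
    and ineq: "\<And>t i. t \<ge> a \<Longrightarrow> y' t $ i \<ge> (\<Sum>j\<in>UNIV. P t i j * y t $ j)"
    and init: "\<And>i. y a $ i \<ge> 0"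
    and t1: "t1 \<ge> a"
  shows "y t1 $ i \<ge> 0"
proof -
  have ycont: "continuous_on {a..} y" using vd_cont der by blast
  have yicont: "continuous_on {a..} (\<lambda>t. y t $ i)" for i
    using ycont by (rule continuous_on_component)
  have "continuous_on {a..t1} (\<lambda>t. \<Sum>i\<in>UNIV. \<Sum>j\<in>UNIV. \<bar>P t i j\<bar>)"
    by (intro continuous_on_sum continuous_on_rabs continuous_on_subset[OF cont]) auto
  then have "compact ((\<lambda>t. \<Sum>i\<in>UNIV. \<Sum>j\<in>UNIV. \<bar>P t i j\<bar>) ` {a..t1})"
    by (rule compact_continuous_image) (rule compact_Icc)
  then have "bounded ((\<lambda>t. \<Sum>i\<in>UNIV. \<Sum>j\<in>UNIV. \<bar>P t i j\<bar>) ` {a..t1})"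
    by (rule compact_imp_bounded)
  then obtain K where K0: "\<And>z. z \<in> (\<lambda>t. \<Sum>i\<in>UNIV. \<Sum>j\<in>UNIV. \<bar>P t i j\<bar>) ` {a..t1} \<Longrightarrow> \<bar>z\<bar> \<le> K"
    unfolding bounded_real by blast
  have K: "\<And>t. t \<in> {a..t1} \<Longrightarrow> (\<Sum>i\<in>UNIV. \<Sum>j\<in>UNIV. \<bar>P t i j\<bar>) \<le> K"
    using K0 by fastforce
  have Kij: "\<bar>P t i j\<bar> \<le> K" if "t \<in> {a..t1}" for t i j
  proof -
    have "\<bar>P t i j\<bar> \<le> (\<Sum>j\<in>UNIV. \<bar>P t i j\<bar>)"
      by (rule member_le_sum) auto
    also have "\<dots> \<le> (\<Sum>i\<in>UNIV. \<Sum>j\<in>UNIV. \<bar>P t i j\<bar>)"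
      by (rule member_le_sum[where f="\<lambda>i. \<Sum>j\<in>UNIV. \<bar>P t i j\<bar>"]) (auto intro: sum_nonneg)
    finally show ?thesis using K[OF that] by linarith
  qed
  have K0: "K \<ge> 0" using Kij[of a] t1 by (meson abs_ge_zero atLeastAtMost_iff order.trans order_refl)
  define lam where "lam = real CARD('n) * K + 1"
  have rowsum: "(\<Sum>j\<in>UNIV. P t i j) \<le> lam - 1" if "t \<in> {a..t1}" for t i
  proof -
    have "(\<Sum>j\<in>UNIV. P t i j) \<le> (\<Sum>j\<in>(UNIV::'n set). K)"
      by (rule sum_mono) (use Kij[OF that] in \<open>auto simp: abs_le_iff\<close>)
    then show ?thesis by (simp add: lam_def)
  qed
  have main: "y t1 $ i > - \<epsilon> * exp (lam * (t1 - a))" if eps: "\<epsilon> > 0" for \<epsilon>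
  proof (rule ccontr)
    assume nc: "\<not> ?thesis"
    define z where "z = (\<lambda>t i. y t $ i + \<epsilon> * exp (lam * (t - a)))"
    have zcont: "continuous_on {a..t1} (\<lambda>t. z t i)" for i
      unfolding z_def by (intro continuous_on_add continuous_on_mult continuous_on_const continuous_on_exp continuous_on_diff continuous_on_id continuous_on_subset[OF yicont]) auto
    define H where "H = (\<Union>i. {t \<in> {a..t1}. z t i \<le> 0})"
    have cl: "closed {t \<in> {a..t1}. z t i \<le> 0}" for i
      using continuous_on_closed_Collect_le[OF zcont[of i] continuous_on_const closed_atLeastAtMost, of 0] by simp
    have Hclosed: "closed H" unfolding H_def
      by (rule closed_UN) (use cl in auto)
    have "t1 \<in> {t \<in> {a..t1}. z t i \<le> 0}" using nc t1 by (simp add: z_def)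
    then have t1H: "t1 \<in> H" unfolding H_def by (rule UN_I[OF UNIV_I])
    have Hne: "H \<noteq> {}" using t1H by auto
    have Hbdd: "bdd_below H" unfolding H_def by (rule bdd_belowI[of _ a]) auto
    define ts where "ts = Inf H"
    have tsH: "ts \<in> H" unfolding ts_def using closed_contains_Inf Hne Hbdd Hclosed by blast
    then obtain k where tsk: "ts \<in> {a..t1}" "z ts k \<le> 0" unfolding H_def by auto
    have zpos_before: "z t j > 0" if "a \<le> t" "t < ts" for t j
    proof (rule ccontr)
      assume "\<not> z t j > 0"
      then have "t \<in> {t \<in> {a..t1}. z t j \<le> 0}" using that tsk by auto
      then have "t \<in> H" unfolding H_def by (rule UN_I[OF UNIV_I])
      then have "ts \<le> t" unfolding ts_def using Hbdd by (rule cInf_lower)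
      then show False using that by auto
    qed
    have za: "z a j > 0" for j unfolding z_def using init[of j] eps by auto
    have tsa: "ts > a"
    proof (rule ccontr)
      assume "\<not> ts > a" then have "ts = a" using tsk by auto
      then show False using tsk za[of k] by auto
    qed
    have zts_nonneg: "z ts j \<ge> 0" for j
    proof -
      have lim: "((\<lambda>t. z t j) \<longlongrightarrow> z ts j) (at ts within {a..<ts})"
      proof -
        have "((\<lambda>t. z t j) \<longlongrightarrow> z ts j) (at ts within {a..t1})"
          using zcont[of j] tsk(1) by (simp add: continuous_on_def)
        then show ?thesis by (rule tendsto_within_subset) (use tsk in auto)
      qed
      have ntb: "at ts within {a..<ts} \<noteq> bot"
        using tsa by (subst at_within_eq_bot_iff) (auto simp: closure_atLeastLessThan)
      have ev: "eventually (\<lambda>t. z t j \<ge> 0) (at ts within {a..<ts})"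
        unfolding eventually_at_filter
        by (intro always_eventually allI impI) (use zpos_before in \<open>auto intro: less_imp_le\<close>)
      show ?thesis
        by (rule tendsto_lowerbound[OF lim ev ntb])
    qed
    have zk0: "z ts k = 0" using zts_nonneg[of k] tsk by auto
    define D where "D = y' ts $ k + \<epsilon> * (lam * exp (lam * (ts - a)))"
    have derz: "((\<lambda>t. z t k) has_real_derivative D) (at ts within {a..})"
      unfolding z_def D_def
      by (rule DERIV_add[OF vd_comp[OF der] exp_der]) (use tsk in auto)
    have "at ts within {a..} = at ts"
      using tsa by (intro at_within_interior) auto
    then have derz': "((\<lambda>t. z t k) has_real_derivative D) (at ts)" using derz by simp
    have Dpos: "D > 0"
    proof -
      define E where "E = \<epsilon> * exp (lam * (ts - a))"
      have e: "E > 0" using eps by (simp add: E_def)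
      have yz: "y ts $ j = z ts j - E" for j unfolding z_def E_def by simp
      have "(\<Sum>j\<in>UNIV. P ts k j * y ts $ j)
            = (\<Sum>j\<in>UNIV. P ts k j * z ts j) - E * (\<Sum>j\<in>UNIV. P ts k j)"
        by (simp add: yz right_diff_distrib sum_subtractf sum_distrib_left mult.commute)
      moreover have "(\<Sum>j\<in>UNIV. P ts k j * z ts j) \<ge> 0"
      proof (rule sum_nonneg)
        fix j show "P ts k j * z ts j \<ge> 0"
          using zk0 offd[of ts k j] tsk zts_nonneg[of j] by (cases "j = k") auto
      qed
      moreover have "(\<Sum>j\<in>UNIV. P ts k j) \<le> lam - 1" using rowsum tsk by auto
      moreover have "y' ts $ k \<ge> (\<Sum>j\<in>UNIV. P ts k j * y ts $ j)" using ineq tsk by auto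
      moreover have "E * (\<Sum>j\<in>UNIV. P ts k j) \<le> E * (lam - 1)"
        using rowsum tsk e by (intro mult_left_mono) auto
      ultimately have "y' ts $ k \<ge> - E * (lam - 1)"
        by linarith
      moreover have "D = y' ts $ k + E * lam" unfolding D_def E_def by simp
      moreover have "- E * (lam - 1) = E - E * lam" by (simp add: algebra_simps)
      ultimately show ?thesis using e by linarith
    qed
    obtain d where d: "d > 0" "\<And>h. h > 0 \<Longrightarrow> h < d \<Longrightarrow> z (ts - h) k < z ts k"
      using DERIV_pos_inc_left[OF derz' Dpos] by blast
    define h where "h = min (d/2) ((ts - a)/2)"
    have "h > 0" "h < d" using d tsa by (auto simp: h_def)
    then have "z (ts - h) k < 0" using d zk0 by auto
    moreover have "a \<le> ts - h" using tsa by (auto simp: h_def min_def field_simps)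
    then have "z (ts - h) k > 0" using zpos_before[of "ts - h" k] \<open>h > 0\<close> by simp
    ultimately show False by auto
  qed
  show ?thesis
  proof (rule ccontr)
    assume "\<not> ?thesis"
    then have neg: "y t1 $ i < 0" by auto
    define \<epsilon> where "\<epsilon> = - y t1 $ i / exp (lam * (t1 - a))"
    have "\<epsilon> > 0" using neg by (simp add: \<epsilon>_def divide_neg_pos)
    from main[OF this] show False by (simp add: \<epsilon>_def)
  qed
qed



lemma lim_nonneg:
  fixes c S :: real
  assumes "\<And>\<delta>. \<delta> > 0 \<Longrightarrow> c + \<delta> * S \<ge> 0"
  shows "c \<ge> 0"
proof -
  have lim: "((\<lambda>\<delta>. c + \<delta> * S) \<longlongrightarrow> c) (at_right 0)"
    by (auto intro!: tendsto_eq_intros)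
  have ev: "eventually (\<lambda>\<delta>. c + \<delta> * S \<ge> 0) (at_right (0::real))"
    unfolding eventually_at_right_field using assms by (intro exI[of _ 1]) auto
  show ?thesis by (rule tendsto_lowerbound[OF lim ev]) simp
qed

lemma ville:
  fixes A :: "'n::finite \<Rightarrow> 'n \<Rightarrow> real"
  assumes no: "\<not> (\<exists>v::real^'n. (\<forall>i. v$i \<ge> 0) \<and> (\<forall>i. (\<Sum>j\<in>UNIV. A i j * v$j) < 0))"
  shows "\<exists>w::real^'n. (\<forall>i. w$i \<ge> 0) \<and> w \<noteq> 0 \<and> (\<forall>j. (\<Sum>i\<in>UNIV. w$i * A i j) \<ge> 0)"
proof -
  define S where "S = {x::real^'n. \<exists>v u. (\<forall>i. v$i \<ge> 0) \<and> (\<forall>i. u$i < 0) \<and>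
                        x = (\<chi> i. (\<Sum>j\<in>UNIV. A i j * v$j) - u$i)}"
  have conv: "convex S"
    unfolding convex_def
  proof (intro ballI allI impI)
    fix x y :: "real^'n" and c d :: real
    assume x: "x \<in> S" and y: "y \<in> S" and cd: "0 \<le> c" "0 \<le> d" "c + d = 1"
    obtain v1 u1 where 1: "\<forall>i. v1$i \<ge> 0" "\<forall>i. u1$i < 0" "x = (\<chi> i. (\<Sum>j\<in>UNIV. A i j * v1$j) - u1$i)"
      using x unfolding S_def by blast
    obtain v2 u2 where 2: "\<forall>i. v2$i \<ge> 0" "\<forall>i. u2$i < 0" "y = (\<chi> i. (\<Sum>j\<in>UNIV. A i j * v2$j) - u2$i)"
      using y unfolding S_def by blast
    have v: "\<forall>i. (c *\<^sub>R v1 + d *\<^sub>R v2)$i \<ge> 0" using 1 2 cd by simp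
    have u: "\<forall>i. (c *\<^sub>R u1 + d *\<^sub>R u2)$i < 0"
    proof
      fix i
      have "c * u1$i \<le> 0" by (rule mult_nonneg_nonpos[OF cd(1) less_imp_le[OF 1(2)[rule_format]]])
      moreover have "d * u2$i \<le> 0" by (rule mult_nonneg_nonpos[OF cd(2) less_imp_le[OF 2(2)[rule_format]]])
      moreover have "c * u1$i < 0 \<or> d * u2$i < 0"
      proof (cases "c > 0")
        case True then show ?thesis using 1 by (simp add: mult_pos_neg)
      next
        case False then have "d > 0" using cd by auto
        then show ?thesis using 2 by (simp add: mult_pos_neg)
      qed
      ultimately show "(c *\<^sub>R u1 + d *\<^sub>R u2)$i < 0" by auto
    qed
    have "c *\<^sub>R x + d *\<^sub>R y = (\<chi> i. (\<Sum>j\<in>UNIV. A i j * (c *\<^sub>R v1 + d *\<^sub>R v2)$j) - (c *\<^sub>R u1 + d *\<^sub>R u2)$i)"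
      unfolding 1(3) 2(3)
      by (simp add: vec_eq_iff algebra_simps sum.distrib sum_distrib_left)
    then show "c *\<^sub>R x + d *\<^sub>R y \<in> S" unfolding S_def using v u by blast
  qed
  have notin: "0 \<notin> S"
  proof
    assume "0 \<in> S"
    then obtain v u where vu: "\<forall>i. v$i \<ge> 0" "\<forall>i. u$i < 0" "0 = (\<chi> i. (\<Sum>j\<in>UNIV. A i j * v$j) - u$i)"
      unfolding S_def by blast
    have "\<forall>i. (\<Sum>j\<in>UNIV. A i j * v$j) < 0"
    proof
      fix i
      from arg_cong[OF vu(3), of "\<lambda>x. x$i"] have "0 = (\<Sum>j\<in>UNIV. A i j * v$j) - u$i" by simp
      then show "(\<Sum>j\<in>UNIV. A i j * v$j) < 0" using vu(2) by auto
    qed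
    then show False using no vu(1) by blast
  qed
  obtain a :: "real^'n" where a: "a \<noteq> 0" "\<And>x. x \<in> S \<Longrightarrow> 0 \<le> inner a x"
    using separating_hyperplane_set_0[OF conv notin] by blast
  have memS: "(\<chi> i. (\<Sum>j\<in>UNIV. A i j * v$j) - u$i) \<in> S" if "\<forall>i. v$i \<ge> 0" "\<forall>i. u$i < 0" for v u
    unfolding S_def using that by blast
  have inner_eq: "inner a x = (\<Sum>i\<in>UNIV. a$i * x$i)" for x
    by (simp add: inner_vec_def)
  have apos: "a$k \<ge> 0" for k
  proof (rule lim_nonneg[where S="\<Sum>i\<in>UNIV. a$i"])
    fix \<delta> :: real assume d: "\<delta> > 0"
    define u :: "real^'n" where "u = (\<chi> i. - (\<delta> + (if i = k then 1 else 0)))"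
    have "(\<chi> i. (\<Sum>j\<in>UNIV. A i j * (0::real^'n)$j) - u$i) \<in> S"
      by (rule memS) (use d in \<open>auto simp: u_def intro!: add_pos_nonneg\<close>)
    then have "0 \<le> inner a (\<chi> i. (\<Sum>j\<in>UNIV. A i j * (0::real^'n)$j) - u$i)"
      using a(2) by blast
    then have "0 \<le> (\<Sum>i\<in>UNIV. a$i * (\<delta> + (if i = k then 1 else 0)))"
      by (simp add: inner_eq u_def add.commute)
    also have "\<dots> = (\<Sum>i\<in>UNIV. \<delta> * a$i + (if i = k then a$i else 0))"
      by (rule sum.cong) (auto simp: algebra_simps)
    also have "\<dots> = a$k + \<delta> * (\<Sum>i\<in>UNIV. a$i)"
      by (simp add: sum.distrib sum_distrib_left)
    finally show "a$k + \<delta> * (\<Sum>i\<in>UNIV. a$i) \<ge> 0" .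
  qed
  have acol: "(\<Sum>i\<in>UNIV. a$i * A i j) \<ge> 0" for j
  proof (rule lim_nonneg[where S="\<Sum>i\<in>UNIV. a$i"])
    fix \<delta> :: real assume d: "\<delta> > 0"
    define u :: "real^'n" where "u = (\<chi> i. - \<delta>)"
    define v :: "real^'n" where "v = (\<chi> i. if i = j then 1 else 0)"
    have "(\<chi> i. (\<Sum>l\<in>UNIV. A i l * v$l) - u$i) \<in> S"
      by (rule memS) (use d in \<open>auto simp: u_def v_def\<close>)
    moreover have "(\<chi> i. (\<Sum>l\<in>UNIV. A i l * v$l) - u$i) = (\<chi> i. A i j + \<delta>)"
      by (simp add: v_def u_def vec_eq_iff if_distrib cong: if_cong)
    ultimately have "(\<chi> i. A i j + \<delta>) \<in> S" by simp
    then have "0 \<le> inner a (\<chi> i. A i j + \<delta>)" using a(2) by blast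
    then have "0 \<le> (\<Sum>i\<in>UNIV. a$i * (A i j + \<delta>))"
      by (simp add: inner_eq)
    also have "\<dots> = (\<Sum>i\<in>UNIV. a$i * A i j) + \<delta> * (\<Sum>i\<in>UNIV. a$i)"
      by (simp add: algebra_simps sum.distrib sum_distrib_left)
    finally show "(\<Sum>i\<in>UNIV. a$i * A i j) + \<delta> * (\<Sum>i\<in>UNIV. a$i) \<ge> 0" .
  qed
  show ?thesis using apos acol a(1) by blast
qed


lemma mono_deriv:
  fixes h h' :: "real \<Rightarrow> real"
  assumes der: "\<And>t. t \<ge> a \<Longrightarrow> (h has_real_derivative h' t) (at t within {a..})"
    and nn: "\<And>t. t \<ge> a \<Longrightarrow> h' t \<ge> 0" and ab: "a \<le> b"
  shows "h a \<le> h b"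
proof (rule DERIV_nonneg_imp_increasing_open[OF ab])
  fix x assume x: "a < x" "x < b"
  have "at x within {a..} = at x" using x by (intro at_within_interior) auto
  then show "\<exists>y. DERIV h x :> y \<and> y \<ge> 0" using der[of x] nn[of x] x by auto
next
  have "continuous_on {a..} h"
    unfolding continuous_on_eq_continuous_within
    using der DERIV_continuous by (meson atLeast_iff)
  then show "continuous_on {a..b} h" by (rule continuous_on_subset) auto
qed

lemma deriv_zero:
  fixes f :: "real \<Rightarrow> real"
  assumes der: "(f has_real_derivative D) (at t within {a..})"
    and z: "\<And>u. u \<ge> a \<Longrightarrow> f u = 0" and t: "t \<ge> a"
  shows "D = 0"
proof (rule ccontr)
  assume "D \<noteq> 0"
  then consider "D > 0" | "D < 0" by linarith
  then show False
  proof cases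
    case 1
    from has_real_derivative_pos_inc_right[OF der 1] obtain d where
      d: "d > 0" "\<And>h. h > 0 \<Longrightarrow> t + h \<in> {a..} \<Longrightarrow> h < d \<Longrightarrow> f t < f (t + h)" by blast
    have "f t < f (t + d/2)" using d t by auto
    then show False using z t d by simp
  next
    case 2
    from has_real_derivative_neg_dec_right[OF der 2] obtain d where
      d: "d > 0" "\<And>h. h > 0 \<Longrightarrow> t + h \<in> {a..} \<Longrightarrow> h < d \<Longrightarrow> f t > f (t + h)" by blast
    have "f t > f (t + d/2)" using d t by auto
    then show False using z t d by simp
  qed
qed

lemma argmax_fin:
  fixes f :: "'n::finite \<Rightarrow> real"
  shows "\<exists>i. \<forall>j. f j \<le> f i"
proof -
  have "Max (range f) \<in> range f" by (rule Max_in) auto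
  then obtain i where "f i = Max (range f)" by (metis rangeE)
  moreover have "f j \<le> Max (range f)" for j by (rule Max_ge) auto
  ultimately show ?thesis by metis
qed


locale sirm =
  fixes \<beta> abar :: "'n::finite \<Rightarrow> 'n \<Rightarrow> real"
    and \<gamma> :: "'n \<Rightarrow> real"
    and \<beta>min \<gamma>min :: real
    and s x opn :: "real \<Rightarrow> real^'n"
  assumes beta_nonneg: "\<And>i j. \<beta> i j \<ge> 0"
    and beta_min_pos: "\<beta>min > 0"
    and beta_ge: "\<And>i j. j \<in> nbrs \<beta> i \<Longrightarrow> \<beta> i j \<ge> \<beta>min"
    and gamma_min_pos: "\<gamma>min > 0"
    and gamma_ge: "\<And>i. \<gamma> i \<ge> \<gamma>min"
    and abar_nonneg: "\<And>i j. abar i j \<ge> 0"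
    and s0: "\<And>i. s 0 $ i \<in> {0..1}"
    and x0: "\<And>i. x 0 $ i \<in> {0..1}"
    and o0: "\<And>i. opn 0 $ i \<in> {0..1}"
    and sx0: "\<And>i. s 0 $ i + x 0 $ i \<le> 1"
    and ds: "\<And>t. t \<ge> 0 \<Longrightarrow> (s has_vector_derivative
              (\<chi> i. - s t $ i * (\<Sum>j\<in>nbrs \<beta> i. (\<beta> i j - (\<beta> i j - \<beta>min) * opn t $ i) * x t $ j)))
              (at t within {0..})"
    and dx: "\<And>t. t \<ge> 0 \<Longrightarrow> (x has_vector_derivative
              (\<chi> i. s t $ i * (\<Sum>j\<in>nbrs \<beta> i. (\<beta> i j - (\<beta> i j - \<beta>min) * opn t $ i) * x t $ j)
                     - (\<gamma>min + (\<gamma> i - \<gamma>min) * opn t $ i) * x t $ i))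
              (at t within {0..})"
    and do: "\<And>t. t \<ge> 0 \<Longrightarrow> (opn has_vector_derivative
              ((1 - s t) - (laplacian abar + mat 1) *v opn t))
              (at t within {0..})"
begin

definition bf :: "'n \<Rightarrow> 'n \<Rightarrow> real \<Rightarrow> real" where
  "bf i j u = \<beta> i j - (\<beta> i j - \<beta>min) * u"
definition gf :: "'n \<Rightarrow> real \<Rightarrow> real" where
  "gf i u = \<gamma>min + (\<gamma> i - \<gamma>min) * u"
definition F :: "real \<Rightarrow> 'n \<Rightarrow> real" where
  "F t i = (\<Sum>j\<in>nbrs \<beta> i. bf i j (opn t $ i) * x t $ j)"
definition M :: "real^'n^'n" where
  "M = laplacian abar + mat 1"
definition Q :: "real \<Rightarrow> 'n \<Rightarrow> 'n \<Rightarrow> real" where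
  "Q t i j = (if j \<in> nbrs \<beta> i then s t $ i * bf i j (opn t $ i) else 0) - (if i = j then gf i (opn t $ i) else 0)"
definition bsum where "bsum = (\<Sum>i\<in>UNIV. \<Sum>j\<in>UNIV. \<beta> i j)"
definition gsum where "gsum = (\<Sum>i\<in>UNIV. \<gamma> i)"

lemma ds': "t \<ge> 0 \<Longrightarrow> (s has_vector_derivative (\<chi> i. - s t $ i * F t i)) (at t within {0..})"
  using ds unfolding F_def bf_def by simp
lemma dx': "t \<ge> 0 \<Longrightarrow> (x has_vector_derivative (\<chi> i. s t $ i * F t i - gf i (opn t $ i) * x t $ i)) (at t within {0..})"
  using dx unfolding F_def bf_def gf_def by simp
lemma do': "t \<ge> 0 \<Longrightarrow> (opn has_vector_derivative ((1 - s t) - M *v opn t)) (at t within {0..})"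
  using do unfolding M_def by simp

lemma Mij: "M $ i $ j = (if i = j then 1 + (\<Sum>k\<in>UNIV. abar i k) else 0) - abar i j"
  unfolding M_def laplacian_def by (simp add: mat_def)

lemma Mv: "(M *v v) $ i = (1 + (\<Sum>k\<in>UNIV. abar i k)) * v $ i - (\<Sum>j\<in>UNIV. abar i j * v $ j)"
proof -
  have "(M *v v) $ i = (\<Sum>j\<in>UNIV. M $ i $ j * v $ j)" by (simp add: matrix_vector_mult_def)
  also have "\<dots> = (\<Sum>j\<in>UNIV. (if i = j then (1 + (\<Sum>k\<in>UNIV. abar i k)) * v $ j else 0) - abar i j * v $ j)"
    by (rule sum.cong) (auto simp: Mij algebra_simps)
  also have "\<dots> = (1 + (\<Sum>k\<in>UNIV. abar i k)) * v $ i - (\<Sum>j\<in>UNIV. abar i j * v $ j)"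
    by (simp add: sum_subtractf)
  finally show ?thesis .
qed

lemma M1: "M *v 1 = 1"
  by (simp add: vec_eq_iff Mv)

lemma M_sum: "(\<Sum>j\<in>UNIV. - (M $ i $ j) * v $ j) = - (M *v v) $ i"
  by (simp add: matrix_vector_mult_def sum_negf)

lemma M_offd: "i \<noteq> j \<Longrightarrow> - (M $ i $ j) \<ge> 0"
  using abar_nonneg by (simp add: Mij)

lemma M_inj: "M *v v = 0 \<Longrightarrow> v = 0"
proof -
  assume Mv0: "M *v v = 0"
  obtain i where i: "\<And>j. \<bar>v $ j\<bar> \<le> \<bar>v $ i\<bar>" using argmax_fin[of "\<lambda>j. \<bar>v $ j\<bar>"] by blast
  have "(M *v v) $ i = 0" using Mv0 by simp
  then have eq: "(1 + (\<Sum>k\<in>UNIV. abar i k)) * v $ i = (\<Sum>j\<in>UNIV. abar i j * v $ j)" by (simp add: Mv)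
  have "\<bar>(\<Sum>j\<in>UNIV. abar i j * v $ j)\<bar> \<le> (\<Sum>j\<in>UNIV. abar i j * \<bar>v $ i\<bar>)"
  proof -
    have "\<bar>(\<Sum>j\<in>UNIV. abar i j * v $ j)\<bar> \<le> (\<Sum>j\<in>UNIV. \<bar>abar i j * v $ j\<bar>)" by (rule sum_abs)
    also have "\<dots> \<le> (\<Sum>j\<in>UNIV. abar i j * \<bar>v $ i\<bar>)"
      by (rule sum_mono) (use abar_nonneg i in \<open>auto simp: abs_mult intro: mult_left_mono\<close>)
    finally show ?thesis .
  qed
  also have "\<dots> = (\<Sum>k\<in>UNIV. abar i k) * \<bar>v $ i\<bar>" by (simp add: sum_distrib_right)
  finally have "(1 + (\<Sum>k\<in>UNIV. abar i k)) * \<bar>v $ i\<bar> \<le> (\<Sum>k\<in>UNIV. abar i k) * \<bar>v $ i\<bar>"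
    using eq by (metis abs_mult abs_of_nonneg add_nonneg_nonneg sum_nonneg abar_nonneg zero_le_one)
  then have "\<bar>v $ i\<bar> \<le> 0" by (simp add: algebra_simps)
  then show "v = 0" using i by (metis abs_le_zero_iff order_trans vec_eq_iff zero_index)
qed

lemma M_invertible: "invertible M"
  using M_inj unfolding invertible_left_inverse matrix_left_invertible_ker by blast

lemma M_Minv: "M *v (matrix_inv M *v w) = w"
proof -
  have "M ** matrix_inv M = mat 1"
    using M_invertible unfolding invertible_def matrix_inv_def by (rule someI_ex[THEN conjunct1])
  then show ?thesis by (simp add: matrix_vector_mul_assoc)
qed

lemma s_cont: "continuous_on {0..} s" by (rule vd_cont[OF ds'])
lemma x_cont: "continuous_on {0..} x" by (rule vd_cont[OF dx'])
lemma o_cont: "continuous_on {0..} opn" by (rule vd_cont[OF do'])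

lemma F_cont: "continuous_on {0..} (\<lambda>t. F t i)"
  unfolding F_def bf_def
  by (intro continuous_on_sum continuous_on_mult continuous_on_diff continuous_on_const
      continuous_on_component s_cont x_cont o_cont)

lemma Q_cont: "continuous_on {0..} (\<lambda>t. Q t i j)"
  unfolding Q_def bf_def gf_def
  by (cases "j \<in> nbrs \<beta> i"; cases "i = j"; simp;
      intro continuous_on_mult continuous_on_diff continuous_on_add continuous_on_const
      continuous_on_component s_cont x_cont o_cont)

lemma x_eq_Q: "(\<Sum>j\<in>UNIV. Q t i j * x t $ j) = s t $ i * F t i - gf i (opn t $ i) * x t $ i"
proof -
  have "(\<Sum>j\<in>UNIV. Q t i j * x t $ j) =
     (\<Sum>j\<in>UNIV. (if j \<in> nbrs \<beta> i then s t $ i * bf i j (opn t $ i) * x t $ j else 0))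
     - (\<Sum>j\<in>UNIV. (if i = j then gf i (opn t $ i) * x t $ j else 0))"
  proof -
    have "Q t i j * x t $ j = (if j \<in> nbrs \<beta> i then s t $ i * bf i j (opn t $ i) * x t $ j else 0)
       - (if i = j then gf i (opn t $ i) * x t $ j else 0)" for j
      unfolding Q_def by (simp add: left_diff_distrib)
    then show ?thesis by (simp add: sum_subtractf)
  qed
  also have "(\<Sum>j\<in>UNIV. (if j \<in> nbrs \<beta> i then s t $ i * bf i j (opn t $ i) * x t $ j else 0))
     = (\<Sum>j\<in>nbrs \<beta> i. s t $ i * bf i j (opn t $ i) * x t $ j)"
    by (simp add: sum.If_cases)
  also have "\<dots> = s t $ i * F t i" unfolding F_def by (simp add: sum_distrib_left mult.assoc)
  finally show ?thesis by simp
qed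

end


context sirm begin

lemma subd: "(f has_vector_derivative D) (at t within {0..}) \<Longrightarrow> a \<ge> 0 \<Longrightarrow> (f has_vector_derivative D) (at t within {a..})"
  by (rule has_vector_derivative_within_subset) auto

lemma sum_diag: "(\<Sum>j\<in>(UNIV::'n set). (if i = j then c else 0) * (f j::real)) = c * f i"
proof -
  have "(\<Sum>j\<in>UNIV. (if i = j then c else 0) * f j) = (\<Sum>j\<in>UNIV. if i = j then c * f j else 0)"
    by (rule sum.cong) auto
  also have "\<dots> = c * f i" by (simp add: sum.delta')
  finally show ?thesis .
qed

lemma s_nonneg: "t \<ge> 0 \<Longrightarrow> s t $ i \<ge> 0"
proof (rule positivity[of 0 "\<lambda>t i j. if i = j then - F t i else 0" s "\<lambda>t. \<chi> i. - s t $ i * F t i"])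
  fix i j show "continuous_on {0..} (\<lambda>t::real. if i = j then - F t i else 0)"
    by (cases "i = j") (auto intro!: continuous_on_minus F_cont)
next
  fix t :: real and i assume "0 \<le> t"
  show "(\<Sum>j\<in>UNIV. (if i = j then - F t i else 0) * s t $ j) \<le> (\<chi> i. - s t $ i * F t i) $ i"
    by (simp add: sum_diag)
qed (use ds' s0 in auto)

lemma o_le1: "t \<ge> 0 \<Longrightarrow> opn t $ i \<le> 1"
proof -
  assume t: "t \<ge> 0"
  have "(1 - opn t) $ i \<ge> 0"
  proof (rule positivity[of 0 "\<lambda>t i j. - (M $ i $ j)" "\<lambda>t. 1 - opn t" "\<lambda>t. 0 - ((1 - s t) - M *v opn t)"])
    fix t :: real and i assume t: "0 \<le> t"
    have "(\<Sum>j\<in>UNIV. - (M $ i $ j) * (1 - opn t) $ j) = - (M *v (1 - opn t)) $ i" by (rule M_sum)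
    also have "\<dots> = - 1 + (M *v opn t) $ i" by (simp add: matrix_vector_mult_diff_distrib M1)
    also have "\<dots> \<le> (0 - ((1 - s t) - M *v opn t)) $ i" using s_nonneg[OF t, of i] by simp
    finally show "(\<Sum>j\<in>UNIV. - (M $ i $ j) * (1 - opn t) $ j) \<le> (0 - ((1 - s t) - M *v opn t)) $ i" .
  next
    fix t :: real assume "0 \<le> t"
    then show "((\<lambda>t. 1 - opn t) has_vector_derivative 0 - ((1 - s t) - M *v opn t)) (at t within {0..})"
      by (intro has_vector_derivative_diff has_vector_derivative_const do')
  qed (use M_offd o0 t in auto)
  then show ?thesis by simp
qed

lemma bf_ge: "j \<in> nbrs \<beta> i \<Longrightarrow> u \<le> 1 \<Longrightarrow> bf i j u \<ge> \<beta>min"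
proof -
  assume j: "j \<in> nbrs \<beta> i" and u: "u \<le> 1"
  have "(\<beta> i j - \<beta>min) * u \<le> (\<beta> i j - \<beta>min) * 1"
    using beta_ge[OF j] u by (intro mult_left_mono) auto
  then show ?thesis unfolding bf_def by simp
qed

lemma bf_le: "j \<in> nbrs \<beta> i \<Longrightarrow> u \<ge> 0 \<Longrightarrow> bf i j u \<le> \<beta> i j"
  unfolding bf_def using beta_ge[of j i] by (simp add: mult_nonneg_nonneg)

lemma gf_ge: "u \<ge> 0 \<Longrightarrow> gf i u \<ge> \<gamma>min"
  unfolding gf_def using gamma_ge[of i] by (simp add: mult_nonneg_nonneg)

lemma gf_le: "u \<le> 1 \<Longrightarrow> gf i u \<le> \<gamma> i"
proof -
  assume u: "u \<le> 1"
  have "(\<gamma> i - \<gamma>min) * u \<le> (\<gamma> i - \<gamma>min) * 1"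
    using gamma_ge[of i] u by (intro mult_left_mono) auto
  then show ?thesis unfolding gf_def by simp
qed

lemma x_nonneg: "t \<ge> 0 \<Longrightarrow> x t $ i \<ge> 0"
proof (rule positivity[of 0 Q x "\<lambda>t. \<chi> i. s t $ i * F t i - gf i (opn t $ i) * x t $ i"])
  fix t :: real and i j :: 'n assume t: "0 \<le> t" and ij: "i \<noteq> j"
  show "0 \<le> Q t i j"
  proof (cases "j \<in> nbrs \<beta> i")
    case True
    have "bf i j (opn t $ i) \<ge> 0" using bf_ge[OF True o_le1[OF t, of i]] beta_min_pos by linarith
    then show ?thesis using True ij s_nonneg[OF t, of i] by (simp add: Q_def)
  qed (use ij in \<open>simp add: Q_def\<close>)
next
  fix t :: real and i assume t: "0 \<le> t"
  show "(\<Sum>j\<in>UNIV. Q t i j * x t $ j) \<le> (\<chi> i. s t $ i * F t i - gf i (opn t $ i) * x t $ i) $ i"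
    by (simp add: x_eq_Q)
qed (use Q_cont dx' x0 in auto)

lemma F_nonneg: assumes t: "t \<ge> 0" shows "F t i \<ge> 0"
  unfolding F_def
proof (rule sum_nonneg)
  fix j assume j: "j \<in> nbrs \<beta> i"
  have "bf i j (opn t $ i) \<ge> 0" using bf_ge[OF j o_le1[OF t, of i]] beta_min_pos by linarith
  then show "bf i j (opn t $ i) * x t $ j \<ge> 0" using x_nonneg[OF t] by simp
qed

lemma s_mono: "0 \<le> a \<Longrightarrow> a \<le> t \<Longrightarrow> s t $ i \<le> s a $ i"
proof -
  assume a: "0 \<le> a" and at: "a \<le> t"
  have "- s a $ i \<le> - s t $ i"
  proof (rule mono_deriv[where h = "\<lambda>t. - s t $ i" and h' = "\<lambda>t. s t $ i * F t i", OF _ _ at])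
    fix u assume u: "a \<le> u"
    have "((\<lambda>t. s t $ i) has_real_derivative (\<chi> i. - s u $ i * F u i) $ i) (at u within {a..})"
      using vd_comp[OF subd[OF ds' a]] u a by auto
    then show "((\<lambda>t. - s t $ i) has_real_derivative s u $ i * F u i) (at u within {a..})"
      using DERIV_minus by fastforce
    show "s u $ i * F u i \<ge> 0" using s_nonneg F_nonneg u a by simp
  qed
  then show ?thesis by simp
qed

lemma s_le1: "t \<ge> 0 \<Longrightarrow> s t $ i \<le> 1"
  using s_mono[of 0 t i] s0[of i] by auto

lemma o_nonneg: "t \<ge> 0 \<Longrightarrow> opn t $ i \<ge> 0"
proof (rule positivity[of 0 "\<lambda>t i j. - (M $ i $ j)" opn "\<lambda>t. (1 - s t) - M *v opn t"])
  fix t :: real and i assume t: "0 \<le> t"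
  show "(\<Sum>j\<in>UNIV. - (M $ i $ j) * opn t $ j) \<le> ((1 - s t) - M *v opn t) $ i"
    using M_sum s_le1[OF t, of i] by simp
qed (use M_offd o0 do' in auto)

lemma sx_le1: "t \<ge> 0 \<Longrightarrow> s t $ i + x t $ i \<le> 1"
proof -
  assume t: "0 \<le> t"
  have "- (s 0 $ i + x 0 $ i) \<le> - (s t $ i + x t $ i)"
  proof (rule mono_deriv[where h = "\<lambda>t. - (s t $ i + x t $ i)" and h' = "\<lambda>t. gf i (opn t $ i) * x t $ i", OF _ _ t])
    fix u :: real assume u: "0 \<le> u"
    have "((\<lambda>t. s t $ i + x t $ i) has_real_derivative
       (\<chi> i. - s u $ i * F u i) $ i + (\<chi> i. s u $ i * F u i - gf i (opn u $ i) * x u $ i) $ i) (at u within {0..})"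
      using vd_comp[OF ds'] vd_comp[OF dx'] u by (intro DERIV_add) auto
    then show "((\<lambda>t. - (s t $ i + x t $ i)) has_real_derivative gf i (opn u $ i) * x u $ i) (at u within {0..})"
      using DERIV_minus by fastforce
    show "gf i (opn u $ i) * x u $ i \<ge> 0"
      using gf_ge[OF o_nonneg[OF u, of i], of i] gamma_min_pos x_nonneg[OF u, of i] by simp
  qed
  then show ?thesis using sx0[of i] by simp
qed

lemma x_le1: "t \<ge> 0 \<Longrightarrow> x t $ i \<le> 1"
  using sx_le1[of t i] s_nonneg[of t i] by linarith

end


lemma vd_scal: "(h has_real_derivative h') (at t within S) \<Longrightarrow>
  ((\<lambda>t. h t *\<^sub>R (v::real^'n::finite)) has_vector_derivative h' *\<^sub>R v) (at t within S)"
proof -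
  assume d: "(h has_real_derivative h') (at t within S)"
  have "((\<lambda>t. h t *\<^sub>R v) has_derivative (\<lambda>r. (r * h') *\<^sub>R v)) (at t within S)"
    using bounded_linear.has_derivative[OF bounded_linear_scaleR_left d[unfolded has_field_derivative_def]]
    by (simp add: mult.commute)
  then show ?thesis unfolding has_vector_derivative_def
    by (rule has_derivative_eq_rhs) (auto simp: fun_eq_iff)
qed

lemma exp_small:
  fixes K c \<mu> T :: real
  assumes c: "c > 0" and mu: "\<mu> > 0"
  shows "eventually (\<lambda>t. K * exp (- \<mu> * (t - T)) < c) at_top"
proof (cases "K \<le> 0")
  case True
  have "K * exp (- \<mu> * (t - T)) \<le> 0" for t by (rule mult_nonpos_nonneg[OF True]) simp
  then have "\<forall>t. K * exp (- \<mu> * (t - T)) < c" using c by (meson le_less_trans)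
  then show ?thesis by (rule always_eventually)
next
  case False
  then have K: "K > 0" by simp
  show ?thesis
  proof (rule eventually_mono[OF eventually_gt_at_top[of "T + ln (K / c) / \<mu>"]])
    fix t assume t: "T + ln (K / c) / \<mu> < t"
    then have "ln (K / c) < \<mu> * (t - T)" using mu by (simp add: field_simps)
    then have "- \<mu> * (t - T) < ln (c / K)" using K c by (simp add: ln_div)
    then have "exp (- \<mu> * (t - T)) < exp (ln (c / K))" by simp
    then have "exp (- \<mu> * (t - T)) < c / K" using K c by simp
    then show "K * exp (- \<mu> * (t - T)) < c" using K by (simp add: field_simps)
  qed
qed

context sirm begin

definition se :: "real^'n" where "se = (\<chi> i. Inf ((\<lambda>t. s t $ i) ` {0..}))"
definition oe :: "real^'n" where "oe = matrix_inv M *v (1 - se)"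

lemma Moe: "M *v oe = 1 - se" unfolding oe_def by (rule M_Minv)

lemma bdd_s: "bdd_below ((\<lambda>t. s t $ i) ` {0..})"
  by (rule bdd_belowI[of _ 0]) (auto intro: s_nonneg)

lemma se_le: "t \<ge> 0 \<Longrightarrow> se $ i \<le> s t $ i"
  unfolding se_def using bdd_s by (auto intro!: cInf_lower)

lemma se_nonneg: "se $ i \<ge> 0"
  unfolding se_def by (auto intro!: cInf_greatest s_nonneg)

lemma se_le1: "se $ i \<le> 1"
  using se_le[of 0 i] s0[of i] by auto

lemma s_tendsto_i: "((\<lambda>t. s t $ i) \<longlongrightarrow> se $ i) at_top"
proof (rule order_tendstoI)
  fix a assume a: "a < se $ i"
  show "eventually (\<lambda>t. a < s t $ i) at_top"
    using eventually_ge_at_top[of "0::real"] by eventually_elim (rule less_le_trans[OF a se_le])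
next
  fix a assume a: "se $ i < a"
  then have "Inf ((\<lambda>t. s t $ i) ` {0..}) < a" by (simp add: se_def)
  then obtain t0 where t0: "t0 \<ge> 0" "s t0 $ i < a"
    using cInf_less_iff[OF _ bdd_s] by auto
  show "eventually (\<lambda>t. s t $ i < a) at_top"
    using eventually_ge_at_top[of t0] by eventually_elim (rule le_less_trans[OF s_mono[OF t0(1)] t0(2)])
qed

lemma s_tendsto: "(s \<longlongrightarrow> se) at_top"
  by (rule vec_tendstoI) (rule s_tendsto_i)

lemma opn_shift_der: "t \<ge> 0 \<Longrightarrow> ((\<lambda>t. opn t - oe) has_vector_derivative ((1 - s t) - M *v opn t)) (at t within {0..})"
  using has_vector_derivative_diff[OF do' has_vector_derivative_const] by simp

definition K0 where "K0 = (\<Sum>j\<in>UNIV. \<bar>opn 0 $ j - oe $ j\<bar>)"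

lemma o_upper: "t \<ge> 0 \<Longrightarrow> opn t $ i - oe $ i \<le> K0 * exp (- t)"
proof -
  assume t: "t \<ge> 0"
  define y where "y = (\<lambda>t. (K0 * exp (- t)) *\<^sub>R (1::real^'n) - (opn t - oe))"
  have "y t $ i \<ge> 0"
  proof (rule positivity[of 0 "\<lambda>t i j. - (M $ i $ j)" y
        "\<lambda>t. (- K0 * exp (- t)) *\<^sub>R 1 - ((1 - s t) - M *v opn t)"])
    fix t :: real assume t: "0 \<le> t"
    have "((\<lambda>t. K0 * exp (- t)) has_real_derivative (- K0 * exp (- t))) (at t within {0..})"
      by (auto intro!: derivative_eq_intros)
    then show "(y has_vector_derivative (- K0 * exp (- t)) *\<^sub>R 1 - ((1 - s t) - M *v opn t)) (at t within {0..})"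
      unfolding y_def by (intro has_vector_derivative_diff vd_scal opn_shift_der t)
  next
    fix t :: real and i assume t: "0 \<le> t"
    have "(\<Sum>j\<in>UNIV. - (M $ i $ j) * y t $ j) = - (M *v y t) $ i" by (rule M_sum)
    also have "M *v y t = (K0 * exp (- t)) *\<^sub>R 1 - (M *v opn t - (1 - se))"
      unfolding y_def by (simp add: matrix_vector_mult_diff_distrib matrix_vector_mult_scaleR M1 Moe)
    finally have "(\<Sum>j\<in>UNIV. - (M $ i $ j) * y t $ j) = - (K0 * exp (- t)) + (M *v opn t) $ i - 1 + se $ i"
      by simp
    then show "(\<Sum>j\<in>UNIV. - (M $ i $ j) * y t $ j) \<le> ((- K0 * exp (- t)) *\<^sub>R 1 - ((1 - s t) - M *v opn t)) $ i"
      using se_le[OF t, of i] by simp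
  next
    fix i
    have "\<bar>opn 0 $ i - oe $ i\<bar> \<le> K0" unfolding K0_def by (rule member_le_sum) auto
    then show "y 0 $ i \<ge> 0" unfolding y_def by simp
  qed (use M_offd t in auto)
  then show ?thesis unfolding y_def by simp
qed

lemma o_lower_gen:
  assumes T: "T \<ge> 0" and mu: "0 \<le> \<mu>" "\<mu> \<le> 1"
    and init: "\<And>i. opn T $ i - oe $ i + K + L \<ge> 0"
    and sb: "\<And>\<tau> i. \<tau> \<ge> T \<Longrightarrow> s \<tau> $ i - se $ i \<le> (1 - \<mu>) * K * exp (- \<mu> * (\<tau> - T)) + L"
    and t: "t \<ge> T"
  shows "opn t $ i - oe $ i \<ge> - (K * exp (- \<mu> * (t - T)) + L)"
proof -
  define y where "y = (\<lambda>t. (K * exp (- \<mu> * (t - T)) + L) *\<^sub>R (1::real^'n) + (opn t - oe))"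
  have "y t $ i \<ge> 0"
  proof (rule positivity[of T "\<lambda>t i j. - (M $ i $ j)" y
        "\<lambda>t. (- \<mu> * K * exp (- \<mu> * (t - T))) *\<^sub>R 1 + ((1 - s t) - M *v opn t)"])
    fix t :: real assume t: "T \<le> t"
    have "((\<lambda>t. K * exp (- \<mu> * (t - T)) + L) has_real_derivative (- \<mu> * K * exp (- \<mu> * (t - T)))) (at t within {T..})"
      by (auto intro!: derivative_eq_intros)
    then show "(y has_vector_derivative (- \<mu> * K * exp (- \<mu> * (t - T))) *\<^sub>R 1 + ((1 - s t) - M *v opn t)) (at t within {T..})"
      unfolding y_def using t T by (intro has_vector_derivative_add vd_scal subd[OF opn_shift_der]) auto
  next
    fix t :: real and i assume t: "T \<le> t"
    have "(\<Sum>j\<in>UNIV. - (M $ i $ j) * y t $ j) = - (M *v y t) $ i" by (rule M_sum)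
    also have "M *v y t = (K * exp (- \<mu> * (t - T)) + L) *\<^sub>R 1 + (M *v opn t - (1 - se))"
      unfolding y_def by (simp add: matrix_vector_mult_diff_distrib matrix_vector_right_distrib matrix_vector_mult_scaleR M1 Moe)
    finally have eq: "(\<Sum>j\<in>UNIV. - (M $ i $ j) * y t $ j) = - (K * exp (- \<mu> * (t - T)) + L) - (M *v opn t) $ i + 1 - se $ i"
      by simp
    have "s t $ i - se $ i \<le> (1 - \<mu>) * K * exp (- \<mu> * (t - T)) + L" using sb t by auto
    then show "(\<Sum>j\<in>UNIV. - (M $ i $ j) * y t $ j) \<le> ((- \<mu> * K * exp (- \<mu> * (t - T))) *\<^sub>R 1 + ((1 - s t) - M *v opn t)) $ i"
      unfolding eq by (simp add: algebra_simps)
  next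
    fix i show "y T $ i \<ge> 0" unfolding y_def using init[of i] by simp
  qed (use M_offd t in auto)
  then show ?thesis unfolding y_def by simp
qed

lemma o_tendsto_i: "((\<lambda>t. opn t $ i) \<longlongrightarrow> oe $ i) at_top"
  unfolding tendsto_iff dist_real_def
proof (intro allI impI)
  fix \<epsilon> :: real assume e: "\<epsilon> > 0"
  have "((\<lambda>t. \<Sum>j\<in>UNIV. s t $ j - se $ j) \<longlongrightarrow> (\<Sum>j\<in>(UNIV::'n set). se $ j - se $ j)) at_top"
    by (intro tendsto_sum tendsto_diff s_tendsto_i tendsto_const)
  then have "eventually (\<lambda>t. (\<Sum>j\<in>UNIV. s t $ j - se $ j) < \<epsilon>/2) at_top"
    using e by (intro order_tendstoD(2)) auto
  then obtain T0 where T0: "\<And>t. t \<ge> T0 \<Longrightarrow> (\<Sum>j\<in>UNIV. s t $ j - se $ j) < \<epsilon>/2"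
    unfolding eventually_at_top_linorder by blast
  define T where "T = max T0 0"
  have T: "T \<ge> 0" "T \<ge> T0" unfolding T_def by auto
  define d where "d = (\<Sum>j\<in>UNIV. s T $ j - se $ j)"
  have d: "d < \<epsilon>/2" using T0[OF T(2)] by (simp add: d_def)
  have dge: "s \<tau> $ j - se $ j \<le> d" if "\<tau> \<ge> T" for \<tau> j
  proof -
    have "s \<tau> $ j - se $ j \<le> s T $ j - se $ j" using s_mono[OF T(1) that] by simp
    also have "\<dots> \<le> d" unfolding d_def
      by (rule member_le_sum) (use se_le T(1) in \<open>auto simp: \<close>)
    finally show ?thesis .
  qed
  define K where "K = (\<Sum>j\<in>UNIV. \<bar>opn T $ j - oe $ j\<bar>)"
  have dnn: "d \<ge> 0" unfolding d_def by (rule sum_nonneg) (use se_le T(1) in auto)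
  have low: "opn t $ i - oe $ i \<ge> - (K * exp (- 1 * (t - T)) + d)" if "t \<ge> T" for t
  proof (rule o_lower_gen[OF T(1), of 1])
    fix i
    have "\<bar>opn T $ i - oe $ i\<bar> \<le> K" unfolding K_def by (rule member_le_sum) auto
    then show "opn T $ i - oe $ i + K + d \<ge> 0" using dnn by linarith
  qed (use dge that in auto)
  have ev1: "eventually (\<lambda>t. K * exp (- 1 * (t - T)) < \<epsilon>/2) at_top"
    using e by (intro exp_small) auto
  have ev2: "eventually (\<lambda>t. K0 * exp (- t) < \<epsilon>) at_top"
    using exp_small[of \<epsilon> 1 K0 0] e by simp
  show "eventually (\<lambda>t. \<bar>opn t $ i - oe $ i\<bar> < \<epsilon>) at_top"
    using ev1 ev2 eventually_ge_at_top[of T]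
  proof eventually_elim
    case (elim t)
    then have "opn t $ i - oe $ i > - \<epsilon>" using low[of t] d by linarith
    moreover have "opn t $ i - oe $ i < \<epsilon>" using o_upper[of t i] elim T by linarith
    ultimately show ?case by linarith
  qed
qed

lemma o_tendsto: "(opn \<longlongrightarrow> oe) at_top"
  by (rule vec_tendstoI) (rule o_tendsto_i)

lemma oe_nonneg: "oe $ i \<ge> 0"
  by (rule tendsto_lowerbound[OF o_tendsto_i]) (auto intro!: eventually_mono[OF eventually_ge_at_top[of "0::real"]] o_nonneg)

lemma oe_le1: "oe $ i \<le> 1"
  by (rule tendsto_upperbound[OF o_tendsto_i]) (auto intro!: eventually_mono[OF eventually_ge_at_top[of "0::real"]] o_le1)

end


context sirm begin

lemma Q_offd: "t \<ge> 0 \<Longrightarrow> i \<noteq> j \<Longrightarrow> Q t i j \<ge> 0"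
proof (cases "j \<in> nbrs \<beta> i")
  case True
  assume t: "t \<ge> 0" and ij: "i \<noteq> j"
  have "bf i j (opn t $ i) \<ge> 0" using bf_ge[OF True o_le1[OF t, of i]] beta_min_pos by linarith
  then show ?thesis using True ij s_nonneg[OF t, of i] by (simp add: Q_def)
qed (simp add: Q_def)

lemma beta_le_bsum: "\<beta> i j \<le> bsum"
proof -
  have "\<beta> i j \<le> (\<Sum>j\<in>UNIV. \<beta> i j)" by (rule member_le_sum) (auto intro: beta_nonneg)
  also have "\<dots> \<le> bsum" unfolding bsum_def
    by (rule member_le_sum[where f = "\<lambda>i. \<Sum>j\<in>UNIV. \<beta> i j"]) (auto intro: sum_nonneg beta_nonneg)
  finally show ?thesis .
qed

lemma gamma_le_gsum: "\<gamma> i \<le> gsum"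
  unfolding gsum_def
  by (rule member_le_sum) (use gamma_ge gamma_min_pos in \<open>auto intro: order_trans[rotated] less_imp_le\<close>)

lemma K0_nonneg: "K0 \<ge> 0" unfolding K0_def by (rule sum_nonneg) auto

definition Z :: "'n set" where "Z = {j. \<exists>t0\<ge>0. \<forall>\<tau>\<ge>t0. x \<tau> $ j = 0}"

lemma x_growth:
  assumes a: "0 \<le> a" and t: "a \<le> t"
  shows "x t $ j \<ge> x a $ j * exp (- gsum * (t - a))"
proof -
  define h where "h = (\<lambda>\<tau>. x \<tau> $ j * exp (gsum * (\<tau> - a)))"
  have "h a \<le> h t"
  proof (rule mono_deriv[where h' = "\<lambda>\<tau>. (s \<tau> $ j * F \<tau> j - gf j (opn \<tau> $ j) * x \<tau> $ j) * exp (gsum * (\<tau> - a))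
        + gsum * exp (gsum * (\<tau> - a)) * x \<tau> $ j", OF _ _ t])
    fix u assume u: "a \<le> u"
    have d1: "((\<lambda>\<tau>. x \<tau> $ j) has_real_derivative (s u $ j * F u j - gf j (opn u $ j) * x u $ j)) (at u within {a..})"
      using vd_comp[OF subd[OF dx' a], of u j] u a by simp
    have d2: "((\<lambda>\<tau>. exp (gsum * (\<tau> - a))) has_real_derivative gsum * exp (gsum * (u - a))) (at u within {a..})"
      by (auto intro!: derivative_eq_intros)
    show "(h has_real_derivative (s u $ j * F u j - gf j (opn u $ j) * x u $ j) * exp (gsum * (u - a))
        + gsum * exp (gsum * (u - a)) * x u $ j) (at u within {a..})"
      unfolding h_def using DERIV_mult[OF d1 d2] by simp
    have u0: "u \<ge> 0" using u a by simp
    have "gf j (opn u $ j) \<le> gsum" using gf_le[OF o_le1[OF u0, of j], of j] gamma_le_gsum[of j] by linarith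
    then have "gf j (opn u $ j) * x u $ j \<le> gsum * x u $ j" using x_nonneg[OF u0, of j] by (rule mult_right_mono)
    moreover have "s u $ j * F u j \<ge> 0" using s_nonneg[OF u0] F_nonneg[OF u0] by simp
    ultimately have "s u $ j * F u j - gf j (opn u $ j) * x u $ j + x u $ j * gsum \<ge> 0" by (simp add: algebra_simps)
    then have "(s u $ j * F u j - gf j (opn u $ j) * x u $ j + x u $ j * gsum) * exp (gsum * (u - a)) \<ge> 0" by simp
    then show "(s u $ j * F u j - gf j (opn u $ j) * x u $ j) * exp (gsum * (u - a))
        + gsum * exp (gsum * (u - a)) * x u $ j \<ge> 0" by (simp add: algebra_simps)
  qed
  then have "x a $ j \<le> x t $ j * exp (gsum * (t - a))" by (simp add: h_def)
  then have "x a $ j * exp (- gsum * (t - a)) \<le> x t $ j * exp (gsum * (t - a)) * exp (- gsum * (t - a))"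
    by (intro mult_right_mono) auto
  also have "\<dots> = x t $ j" by (simp add: mult.assoc exp_add[symmetric])
  finally show ?thesis .
qed

lemma Z_times: "\<exists>t0 T. 0 \<le> t0 \<and> t0 \<le> T \<and> (\<forall>j\<in>Z. \<forall>\<tau>\<ge>t0. x \<tau> $ j = 0) \<and> (\<forall>j. j \<notin> Z \<longrightarrow> (\<forall>\<tau>\<ge>T. x \<tau> $ j > 0))"
proof -
  have "\<forall>j\<in>Z. \<exists>t0. t0 \<ge> 0 \<and> (\<forall>\<tau>\<ge>t0. x \<tau> $ j = 0)" unfolding Z_def by blast
  then obtain f where f: "\<And>j. j \<in> Z \<Longrightarrow> f j \<ge> 0 \<and> (\<forall>\<tau>\<ge>f j. x \<tau> $ j = 0)" by metis
  define t0 where "t0 = (\<Sum>j\<in>Z. f j)"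
  have t0: "t0 \<ge> 0" unfolding t0_def by (rule sum_nonneg) (use f in auto)
  have ft0: "f j \<le> t0" if "j \<in> Z" for j
    unfolding t0_def by (rule member_le_sum) (use f that in auto)
  have zero: "\<forall>j\<in>Z. \<forall>\<tau>\<ge>t0. x \<tau> $ j = 0" using f ft0 by force
  have "\<forall>j\<in>-Z. \<exists>\<tau>. \<tau> \<ge> t0 \<and> x \<tau> $ j > 0"
  proof
    fix j assume "j \<in> -Z"
    then have "\<not> (\<forall>\<tau>\<ge>t0. x \<tau> $ j = 0)" using t0 unfolding Z_def by auto
    then obtain \<tau> where "\<tau> \<ge> t0" "x \<tau> $ j \<noteq> 0" by auto
    then show "\<exists>\<tau>. \<tau> \<ge> t0 \<and> x \<tau> $ j > 0" using x_nonneg[of \<tau> j] t0 by (intro exI[of _ \<tau>]) auto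
  qed
  then obtain g where g: "\<And>j. j \<in> -Z \<Longrightarrow> g j \<ge> t0 \<and> x (g j) $ j > 0" by metis
  define T where "T = t0 + (\<Sum>j\<in>-Z. g j - t0)"
  have gT: "g j \<le> T" if "j \<in> -Z" for j
  proof -
    have "g j - t0 \<le> (\<Sum>j\<in>-Z. g j - t0)" by (rule member_le_sum) (use g that in auto)
    then show ?thesis unfolding T_def by simp
  qed
  have "0 \<le> (\<Sum>j\<in>-Z. g j - t0)" by (rule sum_nonneg) (use g in auto)
  then have T: "t0 \<le> T" unfolding T_def by simp
  have pos: "\<forall>\<tau>\<ge>T. x \<tau> $ j > 0" if "j \<notin> Z" for j
  proof (intro allI impI)
    fix \<tau> assume tau: "\<tau> \<ge> T"
    have gj: "g j \<ge> 0" "g j \<le> \<tau>" using g[of j] gT[of j] that t0 tau by auto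
    have "x \<tau> $ j \<ge> x (g j) $ j * exp (- gsum * (\<tau> - g j))" by (rule x_growth[OF gj])
    moreover have "x (g j) $ j * exp (- gsum * (\<tau> - g j)) > 0" using g[of j] that by simp
    ultimately show "x \<tau> $ j > 0" by linarith
  qed
  show ?thesis using t0 T zero pos by blast
qed

end


context sirm begin

definition Qe :: "'n \<Rightarrow> 'n \<Rightarrow> real" where
  "Qe i j = (if j \<in> nbrs \<beta> i then se $ i * bf i j (oe $ i) else 0) - (if i = j then gf i (oe $ i) else 0)"
definition Ah :: "'n \<Rightarrow> 'n \<Rightarrow> real" where
  "Ah i j = (if i \<notin> Z \<and> j \<notin> Z then Qe i j else if i = j then -1 else 0)"
definition Qh :: "real \<Rightarrow> 'n \<Rightarrow> 'n \<Rightarrow> real" where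
  "Qh t i j = (if i \<notin> Z \<and> j \<notin> Z then Q t i j else if i = j then -1 else 0)"
definition dxv :: "real \<Rightarrow> real^'n" where
  "dxv t = (\<chi> i. s t $ i * F t i - gf i (opn t $ i) * x t $ i)"

lemma dyn_hat:
  assumes t0: "0 \<le> t0" "\<forall>j\<in>Z. \<forall>\<tau>\<ge>t0. x \<tau> $ j = 0" and tau: "\<tau> \<ge> t0"
  shows "dxv \<tau> $ i = (\<Sum>j\<in>UNIV. Qh \<tau> i j * x \<tau> $ j)"
proof (cases "i \<in> Z")
  case True
  have der: "((\<lambda>t. x t $ i) has_real_derivative dxv \<tau> $ i) (at \<tau> within {t0..})"
    using vd_comp[OF subd[OF dx' t0(1)], of \<tau> i] tau t0 by (simp add: dxv_def)
  have "dxv \<tau> $ i = 0" by (rule deriv_zero[OF der]) (use t0 True tau in auto)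
  moreover have "(\<Sum>j\<in>UNIV. Qh \<tau> i j * x \<tau> $ j) = - x \<tau> $ i"
  proof -
    have "(\<Sum>j\<in>UNIV. Qh \<tau> i j * x \<tau> $ j) = (\<Sum>j\<in>UNIV. (if i = j then -1 else 0) * x \<tau> $ j)"
      by (rule sum.cong) (use True in \<open>auto simp: Qh_def\<close>)
    also have "\<dots> = - x \<tau> $ i" by (simp add: sum_diag)
    finally show ?thesis .
  qed
  ultimately show ?thesis using t0 True tau by auto
next
  case False
  have "dxv \<tau> $ i = (\<Sum>j\<in>UNIV. Q \<tau> i j * x \<tau> $ j)" by (simp add: dxv_def x_eq_Q)
  also have "\<dots> = (\<Sum>j\<in>UNIV. Qh \<tau> i j * x \<tau> $ j)"
  proof (rule sum.cong)
    fix j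
    show "Q \<tau> i j * x \<tau> $ j = Qh \<tau> i j * x \<tau> $ j"
    proof (cases "j \<in> Z")
      case True then show ?thesis using t0 tau by auto
    qed (use False in \<open>simp add: Qh_def\<close>)
  qed simp
  finally show ?thesis .
qed

lemma Qh_cont: "continuous_on {0..} (\<lambda>t. Qh t i j)"
  unfolding Qh_def by (cases "i \<notin> Z \<and> j \<notin> Z") (auto intro: Q_cont)

lemma Qh_offd: "t \<ge> 0 \<Longrightarrow> i \<noteq> j \<Longrightarrow> Qh t i j \<ge> 0"
  unfolding Qh_def using Q_offd by auto

lemma branch1:
  assumes t0: "0 \<le> t0" "\<forall>j\<in>Z. \<forall>\<tau>\<ge>t0. x \<tau> $ j = 0" and T1: "T1 \<ge> t0"
    and v: "\<And>i. v $ i > 0" and eps: "\<epsilon> > 0"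
    and neg: "\<And>\<tau> i. \<tau> \<ge> T1 \<Longrightarrow> (\<Sum>j\<in>UNIV. Qh \<tau> i j * v $ j) \<le> - \<epsilon> * v $ i"
  shows "\<exists>C\<ge>0. \<forall>\<tau>\<ge>T1. \<forall>i. x \<tau> $ i \<le> C * exp (- \<epsilon> * (\<tau> - T1)) * v $ i"
proof -
  have T10: "T1 \<ge> 0" using t0 T1 by simp
  define C where "C = (\<Sum>i\<in>UNIV. x T1 $ i / v $ i)"
  have C0: "C \<ge> 0" unfolding C_def by (rule sum_nonneg) (use x_nonneg T10 v in \<open>auto intro: divide_nonneg_pos\<close>)
  have Ci: "x T1 $ i \<le> C * v $ i" for i
  proof -
    have "x T1 $ i / v $ i \<le> C" unfolding C_def
      by (rule member_le_sum) (use x_nonneg T10 v in \<open>auto intro: divide_nonneg_pos\<close>)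
    then show ?thesis using v[of i] by (simp add: divide_le_eq)
  qed
  define y where "y = (\<lambda>\<tau>. (C * exp (- \<epsilon> * (\<tau> - T1))) *\<^sub>R v - x \<tau>)"
  have "\<forall>\<tau>\<ge>T1. \<forall>i. y \<tau> $ i \<ge> 0"
  proof (intro allI impI)
    fix \<tau> i assume tau: "\<tau> \<ge> T1"
    show "y \<tau> $ i \<ge> 0"
    proof (rule positivity[of T1 Qh y "\<lambda>t. (- \<epsilon> * (C * exp (- \<epsilon> * (t - T1)))) *\<^sub>R v - dxv t"])
      fix i j show "continuous_on {T1..} (\<lambda>t. Qh t i j)"
        by (rule continuous_on_subset[OF Qh_cont]) (use T10 in auto)
    next
      fix t :: real and i j :: 'n assume "T1 \<le> t" "i \<noteq> j" then show "Qh t i j \<ge> 0"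
        using Qh_offd T10 by auto
    next
      fix t :: real assume t: "T1 \<le> t"
      have "((\<lambda>t. C * exp (- \<epsilon> * (t - T1))) has_real_derivative (- \<epsilon> * (C * exp (- \<epsilon> * (t - T1))))) (at t within {T1..})"
        by (auto intro!: derivative_eq_intros)
      moreover have "(x has_vector_derivative dxv t) (at t within {T1..})"
        using subd[OF dx' T10, of t] t T10 by (simp add: dxv_def)
      ultimately show "(y has_vector_derivative (- \<epsilon> * (C * exp (- \<epsilon> * (t - T1)))) *\<^sub>R v - dxv t) (at t within {T1..})"
        unfolding y_def by (intro has_vector_derivative_diff vd_scal)
    next
      fix t :: real and i assume t: "T1 \<le> t"
      define E where "E = C * exp (- \<epsilon> * (t - T1))"
      have E0: "E \<ge> 0" unfolding E_def using C0 by simp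
      have "(\<Sum>j\<in>UNIV. Qh t i j * y t $ j) = E * (\<Sum>j\<in>UNIV. Qh t i j * v $ j) - (\<Sum>j\<in>UNIV. Qh t i j * x t $ j)"
        unfolding y_def E_def[symmetric] by (simp add: right_diff_distrib sum_subtractf sum_distrib_left algebra_simps)
      also have "(\<Sum>j\<in>UNIV. Qh t i j * x t $ j) = dxv t $ i"
        using dyn_hat[OF t0, of t i] t T1 by simp
      also have "E * (\<Sum>j\<in>UNIV. Qh t i j * v $ j) \<le> E * (- \<epsilon> * v $ i)"
        using neg[OF t, of i] E0 by (rule mult_left_mono)
      finally show "(\<Sum>j\<in>UNIV. Qh t i j * y t $ j) \<le> ((- \<epsilon> * (C * exp (- \<epsilon> * (t - T1)))) *\<^sub>R v - dxv t) $ i"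
        by (simp add: E_def algebra_simps)
    next
      fix i show "y T1 $ i \<ge> 0" unfolding y_def using Ci[of i] by simp
    qed (use tau in auto)
  qed
  then show ?thesis using C0 by (intro exI[of _ C]) (auto simp: y_def)
qed

lemma entry_bound:
  assumes tau: "\<tau> \<ge> 0" and small: "(bsum / \<beta>min) * (K0 * exp (- \<tau>)) \<le> 1"
  shows "Q \<tau> i j \<ge> (1 - (bsum / \<beta>min) * (K0 * exp (- \<tau>))) * Qe i j
          - (bsum / \<beta>min + gsum / \<gamma>min) * (K0 * exp (- \<tau>)) * (if i = j then gf i (oe $ i) else 0)"
proof -
  define \<delta> where "\<delta> = K0 * exp (- \<tau>)"
  define cb where "cb = bsum / \<beta>min"
  define cg where "cg = gsum / \<gamma>min"
  have d0: "\<delta> \<ge> 0" unfolding \<delta>_def using K0_nonneg by simp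
  have oub: "opn \<tau> $ i - oe $ i \<le> \<delta>" unfolding \<delta>_def by (rule o_upper[OF tau])
  define A where "A = (if j \<in> nbrs \<beta> i then s \<tau> $ i * bf i j (opn \<tau> $ i) else 0)"
  define Ae where "Ae = (if j \<in> nbrs \<beta> i then se $ i * bf i j (oe $ i) else 0)"
  define G where "G = (if i = j then gf i (opn \<tau> $ i) else 0)"
  define Ge where "Ge = (if i = j then gf i (oe $ i) else 0)"
  have QA: "Q \<tau> i j = A - G" unfolding Q_def A_def G_def by simp
  have QeA: "Qe i j = Ae - Ge" unfolding Qe_def Ae_def Ge_def by simp
  have Ab: "A \<ge> (1 - cb * \<delta>) * Ae"
  proof (cases "j \<in> nbrs \<beta> i")
    case True
    have bfo: "bf i j (opn \<tau> $ i) \<ge> 0" using bf_ge[OF True o_le1[OF tau, of i]] beta_min_pos by linarith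
    have bfe: "bf i j (oe $ i) \<ge> \<beta>min" by (rule bf_ge[OF True oe_le1])
    have "(\<beta> i j - \<beta>min) * (opn \<tau> $ i - oe $ i) \<le> (\<beta> i j - \<beta>min) * \<delta>"
      using beta_ge[OF True] oub by (intro mult_left_mono) auto
    then have b1: "bf i j (opn \<tau> $ i) \<ge> bf i j (oe $ i) - (\<beta> i j - \<beta>min) * \<delta>"
      unfolding bf_def by (simp add: algebra_simps)
    have "\<beta> i j - \<beta>min \<le> cb * \<beta>min"
      unfolding cb_def using beta_le_bsum[of i j] beta_min_pos by simp
    also have "\<dots> \<le> cb * bf i j (oe $ i)"
      using bfe by (intro mult_left_mono) (use beta_min_pos beta_le_bsum[of i j] beta_nonneg[of i j] in \<open>auto simp: cb_def\<close>)
    finally have "(\<beta> i j - \<beta>min) * \<delta> \<le> cb * bf i j (oe $ i) * \<delta>" using d0 by (rule mult_right_mono)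
    with b1 have b2: "bf i j (opn \<tau> $ i) \<ge> (1 - cb * \<delta>) * bf i j (oe $ i)" by (simp add: algebra_simps)
    have "s \<tau> $ i * bf i j (opn \<tau> $ i) \<ge> se $ i * bf i j (opn \<tau> $ i)"
      using se_le[OF tau, of i] bfo by (rule mult_right_mono)
    moreover have "se $ i * bf i j (opn \<tau> $ i) \<ge> se $ i * ((1 - cb * \<delta>) * bf i j (oe $ i))"
      using b2 se_nonneg[of i] by (rule mult_left_mono)
    ultimately show ?thesis using True unfolding A_def Ae_def by (simp add: algebra_simps)
  qed (simp add: A_def Ae_def)
  have Gb: "G \<le> (1 + cg * \<delta>) * Ge"
  proof (cases "i = j")
    case True
    have gfe: "gf i (oe $ i) \<ge> \<gamma>min" by (rule gf_ge[OF oe_nonneg])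
    have "(\<gamma> i - \<gamma>min) * (opn \<tau> $ i - oe $ i) \<le> (\<gamma> i - \<gamma>min) * \<delta>"
      using gamma_ge[of i] oub by (intro mult_left_mono) auto
    then have g1: "gf i (opn \<tau> $ i) \<le> gf i (oe $ i) + (\<gamma> i - \<gamma>min) * \<delta>"
      unfolding gf_def by (simp add: algebra_simps)
    have "\<gamma> i - \<gamma>min \<le> cg * \<gamma>min"
      unfolding cg_def using gamma_le_gsum[of i] gamma_min_pos by simp
    also have "\<dots> \<le> cg * gf i (oe $ i)"
      using gfe by (intro mult_left_mono) (use gamma_min_pos gamma_le_gsum[of i] gamma_ge[of i] in \<open>auto simp: cg_def\<close>)
    finally have "(\<gamma> i - \<gamma>min) * \<delta> \<le> cg * gf i (oe $ i) * \<delta>" using d0 by (rule mult_right_mono)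
    with g1 show ?thesis using True unfolding G_def Ge_def by (simp add: algebra_simps)
  qed (simp add: G_def Ge_def)
  have "(1 - cb * \<delta>) * (Ae - Ge) - (cb + cg) * \<delta> * Ge = (1 - cb * \<delta>) * Ae - (1 + cg * \<delta>) * Ge"
    by (simp add: algebra_simps)
  then show ?thesis using Ab Gb unfolding \<delta>_def[symmetric] cb_def[symmetric] cg_def[symmetric] Ge_def[symmetric] QA QeA
    by linarith
qed

lemma branch2:
  assumes t0: "0 \<le> t0" "t0 \<le> T" "\<forall>j\<in>Z. \<forall>\<tau>\<ge>t0. x \<tau> $ j = 0"
    and Tpos: "\<forall>j. j \<notin> Z \<longrightarrow> (\<forall>\<tau>\<ge>T. x \<tau> $ j > 0)"
    and w: "\<forall>i. w $ i \<ge> 0" "w \<noteq> 0" "\<forall>j. (\<Sum>i\<in>UNIV. w $ i * Ah i j) \<ge> 0"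
  shows False
proof -
  have wZ: "w $ j = 0" if j: "j \<in> Z" for j
  proof -
    have "(\<Sum>i\<in>UNIV. w $ i * Ah i j) = (\<Sum>i\<in>UNIV. if i = j then - w $ i else 0)"
      by (rule sum.cong) (use j in \<open>auto simp: Ah_def\<close>)
    also have "\<dots> = - w $ j" by simp
    finally have "(\<Sum>i\<in>UNIV. w $ i * Ah i j) = - w $ j" .
    then show ?thesis using w(1)[rule_format, of j] w(3)[rule_format, of j] by linarith
  qed
  obtain k where k: "w $ k \<noteq> 0" using w(2) vec_eq_iff[of w 0] by auto
  have kpos: "w $ k > 0" using k w(1) by (simp add: order_le_neq_trans)
  have kZ: "k \<notin> Z" using wZ k by auto
  define y where "y = (\<lambda>\<tau>. \<Sum>i\<in>UNIV. w $ i * x \<tau> $ i)"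
  have T0: "T \<ge> 0" using t0 by simp
  have ynn: "\<tau> \<ge> 0 \<Longrightarrow> y \<tau> \<ge> 0" for \<tau>
    unfolding y_def by (rule sum_nonneg) (use w(1) x_nonneg in simp)
  have ypos: "y \<tau> > 0" if "\<tau> \<ge> T" for \<tau>
  proof -
    have "w $ k * x \<tau> $ k \<le> y \<tau>" unfolding y_def
      by (rule member_le_sum) (use w(1) x_nonneg that T0 in auto)
    moreover have "w $ k * x \<tau> $ k > 0" using kpos Tpos kZ that by simp
    ultimately show ?thesis by linarith
  qed
  define cb where "cb = bsum / \<beta>min"
  define cg where "cg = gsum / \<gamma>min"
  define \<kappa> where "\<kappa> = (cb + cg) * K0 * gsum"
  have cb0: "cb \<ge> 0" unfolding cb_def using beta_le_bsum[of k k] beta_nonneg[of k k] beta_min_pos by simp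
  have cg0: "cg \<ge> 0" unfolding cg_def using gamma_le_gsum[of k] gamma_ge[of k] gamma_min_pos by simp
  have gs0: "gsum \<ge> 0" using gamma_le_gsum[of k] gamma_ge[of k] gamma_min_pos by simp
  have kap0: "\<kappa> \<ge> 0" unfolding \<kappa>_def using cb0 cg0 gs0 K0_nonneg by simp
  have "eventually (\<lambda>\<tau>. (cb * K0) * exp (- 1 * (\<tau> - 0)) < 1) at_top"
    by (rule exp_small) auto
  then obtain T2 where T2: "\<And>\<tau>. \<tau> \<ge> T2 \<Longrightarrow> cb * (K0 * exp (- \<tau>)) < 1"
    unfolding eventually_at_top_linorder by (auto simp: mult.assoc)
  define T3 where "T3 = max T (max T2 0)"
  have T3: "T3 \<ge> T" "T3 \<ge> T2" "T3 \<ge> 0" "T3 \<ge> t0" unfolding T3_def using t0 by auto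
  have colbound: "(\<Sum>i\<in>UNIV. w $ i * Qh \<tau> i j) \<ge> - \<kappa> * exp (- \<tau>) * w $ j" if tau: "\<tau> \<ge> T3" for \<tau> j
  proof -
    define \<delta> where "\<delta> = K0 * exp (- \<tau>)"
    have d0: "\<delta> \<ge> 0" unfolding \<delta>_def using K0_nonneg by simp
    have small: "cb * \<delta> \<le> 1" using T2[of \<tau>] tau T3 unfolding \<delta>_def by auto
    have tau0: "\<tau> \<ge> 0" using tau T3 by simp
    have termb: "w $ i * Qh \<tau> i j \<ge> (1 - cb * \<delta>) * (w $ i * Ah i j) - (cb + cg) * \<delta> * (w $ i * (if i = j then gf i (oe $ i) else 0))" for i
    proof (cases "i \<notin> Z \<and> j \<notin> Z")
      case True
      have "Q \<tau> i j \<ge> (1 - cb * \<delta>) * Qe i j - (cb + cg) * \<delta> * (if i = j then gf i (oe $ i) else 0)"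
        using entry_bound[OF tau0, of i j] small unfolding cb_def cg_def \<delta>_def by simp
      then have "w $ i * Q \<tau> i j \<ge> w $ i * ((1 - cb * \<delta>) * Qe i j - (cb + cg) * \<delta> * (if i = j then gf i (oe $ i) else 0))"
        using w(1) by (intro mult_left_mono) auto
      then show ?thesis using True by (simp add: Qh_def Ah_def algebra_simps)
    next
      case False
      show ?thesis
      proof (cases "i = j")
        case True
        then have "w $ i = 0" using False wZ by auto
        then show ?thesis by simp
      next
        case ij: False
        have "Qh \<tau> i j = 0" "Ah i j = 0" using False ij by (auto simp: Qh_def Ah_def)
        then show ?thesis using ij by simp
      qed
    qed
    have "(\<Sum>i\<in>UNIV. w $ i * Qh \<tau> i j) \<ge> (\<Sum>i\<in>UNIV. (1 - cb * \<delta>) * (w $ i * Ah i j) - (cb + cg) * \<delta> * (w $ i * (if i = j then gf i (oe $ i) else 0)))"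
      by (rule sum_mono) (rule termb)
    also have "(\<Sum>i\<in>UNIV. (1 - cb * \<delta>) * (w $ i * Ah i j) - (cb + cg) * \<delta> * (w $ i * (if i = j then gf i (oe $ i) else 0)))
       = (1 - cb * \<delta>) * (\<Sum>i\<in>UNIV. w $ i * Ah i j) - (cb + cg) * \<delta> * (w $ j * gf j (oe $ j))"
    proof -
      have eq: "(\<Sum>i\<in>UNIV. w $ i * (if i = j then gf i (oe $ i) else 0)) = w $ j * gf j (oe $ j)"
      proof -
        have "(\<Sum>i\<in>UNIV. w $ i * (if i = j then gf i (oe $ i) else 0)) = (\<Sum>i\<in>UNIV. if i = j then w $ i * gf i (oe $ i) else 0)"
          by (rule sum.cong) auto
        then show ?thesis by simp
      qed
      have e1: "(\<Sum>i\<in>UNIV. (cb + cg) * \<delta> * (w $ i * (if i = j then gf i (oe $ i) else 0)))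
          = (cb + cg) * \<delta> * (\<Sum>i\<in>UNIV. w $ i * (if i = j then gf i (oe $ i) else 0))"
        by (rule sum_distrib_left[symmetric])
      have e2: "(\<Sum>i\<in>UNIV. (1 - cb * \<delta>) * (w $ i * Ah i j)) = (1 - cb * \<delta>) * (\<Sum>i\<in>UNIV. w $ i * Ah i j)"
        by (rule sum_distrib_left[symmetric])
      show ?thesis by (simp only: sum_subtractf e1 e2 eq)
    qed
    finally have s1: "(\<Sum>i\<in>UNIV. w $ i * Qh \<tau> i j) \<ge> (1 - cb * \<delta>) * (\<Sum>i\<in>UNIV. w $ i * Ah i j) - (cb + cg) * \<delta> * (w $ j * gf j (oe $ j))" .
    have "(1 - cb * \<delta>) * (\<Sum>i\<in>UNIV. w $ i * Ah i j) \<ge> 0" using small w(3) by simp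
    moreover have "w $ j * gf j (oe $ j) \<le> w $ j * gsum"
      using gf_le[OF oe_le1[of j], of j] gamma_le_gsum[of j] w(1) by (intro mult_left_mono) auto
    then have "(cb + cg) * \<delta> * (w $ j * gf j (oe $ j)) \<le> (cb + cg) * \<delta> * (w $ j * gsum)"
      by (rule mult_left_mono) (use cb0 cg0 d0 in auto)
    ultimately have "(\<Sum>i\<in>UNIV. w $ i * Qh \<tau> i j) \<ge> - ((cb + cg) * \<delta> * (w $ j * gsum))" using s1 by linarith
    then show ?thesis unfolding \<kappa>_def \<delta>_def by (simp add: algebra_simps)
  qed
  have yder: "(y has_real_derivative (\<Sum>i\<in>UNIV. w $ i * dxv \<tau> $ i)) (at \<tau> within {T3..})" if "\<tau> \<ge> T3" for \<tau>
  proof -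
    have "((\<lambda>t. x t $ i) has_real_derivative dxv \<tau> $ i) (at \<tau> within {T3..})" for i
      using vd_comp[OF subd[OF dx' T3(3)], of \<tau> i] that T3 by (simp add: dxv_def)
    then show ?thesis unfolding y_def by (intro DERIV_sum DERIV_cmult) auto
  qed
  have ylow: "(\<Sum>i\<in>UNIV. w $ i * dxv \<tau> $ i) \<ge> - \<kappa> * exp (- \<tau>) * y \<tau>" if tau: "\<tau> \<ge> T3" for \<tau>
  proof -
    have "(\<Sum>i\<in>UNIV. w $ i * dxv \<tau> $ i) = (\<Sum>i\<in>UNIV. \<Sum>j\<in>UNIV. w $ i * (Qh \<tau> i j * x \<tau> $ j))"
      using dyn_hat[OF t0(1,3), of \<tau>] tau T3 by (simp add: sum_distrib_left)
    also have "\<dots> = (\<Sum>j\<in>UNIV. \<Sum>i\<in>UNIV. w $ i * (Qh \<tau> i j * x \<tau> $ j))"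
      by (rule sum.swap)
    also have "\<dots> = (\<Sum>j\<in>UNIV. x \<tau> $ j * (\<Sum>i\<in>UNIV. w $ i * Qh \<tau> i j))"
      unfolding sum_distrib_left by (intro sum.cong refl) (simp add: algebra_simps)
    also have "\<dots> \<ge> (\<Sum>j\<in>UNIV. x \<tau> $ j * (- \<kappa> * exp (- \<tau>) * w $ j))"
    proof (rule sum_mono)
      fix j
      show "x \<tau> $ j * (- \<kappa> * exp (- \<tau>) * w $ j) \<le> x \<tau> $ j * (\<Sum>i\<in>UNIV. w $ i * Qh \<tau> i j)"
        by (rule mult_left_mono[OF colbound[OF tau]]) (use x_nonneg tau T3 in auto)
    qed
    also have "(\<Sum>j\<in>UNIV. x \<tau> $ j * (- \<kappa> * exp (- \<tau>) * w $ j)) = - \<kappa> * exp (- \<tau>) * y \<tau>"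
      unfolding y_def by (simp add: sum_distrib_left algebra_simps)
    finally show ?thesis .
  qed
  define h where "h = (\<lambda>\<tau>. y \<tau> * exp (- \<kappa> * exp (- \<tau>)))"
  have hmono: "h T3 \<le> h \<tau>" if "\<tau> \<ge> T3" for \<tau>
  proof (rule mono_deriv[where h' = "\<lambda>\<tau>. (\<Sum>i\<in>UNIV. w $ i * dxv \<tau> $ i) * exp (- \<kappa> * exp (- \<tau>))
       + exp (- \<kappa> * exp (- \<tau>)) * (\<kappa> * exp (- \<tau>)) * y \<tau>", OF _ _ that])
    fix u assume u: "T3 \<le> u"
    have d2: "((\<lambda>\<tau>. exp (- \<kappa> * exp (- \<tau>))) has_real_derivative exp (- \<kappa> * exp (- u)) * (\<kappa> * exp (- u))) (at u within {T3..})"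
      by (auto intro!: derivative_eq_intros)
    show "(h has_real_derivative (\<Sum>i\<in>UNIV. w $ i * dxv u $ i) * exp (- \<kappa> * exp (- u))
       + exp (- \<kappa> * exp (- u)) * (\<kappa> * exp (- u)) * y u) (at u within {T3..})"
      unfolding h_def using DERIV_mult[OF yder[OF u] d2] by simp
    have "(\<Sum>i\<in>UNIV. w $ i * dxv u $ i) + \<kappa> * exp (- u) * y u \<ge> 0" using ylow[OF u] by simp
    then have "exp (- \<kappa> * exp (- u)) * ((\<Sum>i\<in>UNIV. w $ i * dxv u $ i) + \<kappa> * exp (- u) * y u) \<ge> 0" by simp
    then show "(\<Sum>i\<in>UNIV. w $ i * dxv u $ i) * exp (- \<kappa> * exp (- u))
       + exp (- \<kappa> * exp (- u)) * (\<kappa> * exp (- u)) * y u \<ge> 0" by (simp add: algebra_simps)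
  qed
  define c0 where "c0 = h T3"
  have c0: "c0 > 0" unfolding c0_def h_def using ypos[OF T3(1)] by simp
  have ylb: "y \<tau> \<ge> c0" if "\<tau> \<ge> T3" for \<tau>
  proof -
    have "exp (- \<kappa> * exp (- \<tau>)) \<le> 1" using kap0 by simp
    then have "h \<tau> \<le> y \<tau>" unfolding h_def using ynn[of \<tau>] that T3 by (simp add: mult_left_le)
    then show ?thesis using hmono[OF that] unfolding c0_def by simp
  qed
  define W where "W = (\<Sum>i\<in>UNIV. w $ i)"
  have wW: "w $ i \<le> W" for i unfolding W_def by (rule member_le_sum) (use w(1) in auto)
  have W0: "W > 0" using wW[of k] kpos by simp
  have yW: "y \<tau> \<le> W * (\<Sum>i\<in>UNIV. x \<tau> $ i)" if "\<tau> \<ge> 0" for \<tau>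
    unfolding y_def sum_distrib_left by (rule sum_mono) (use wW x_nonneg that in \<open>auto intro: mult_right_mono\<close>)
  define V where "V = (\<lambda>\<tau>. \<Sum>i\<in>UNIV. s \<tau> $ i + x \<tau> $ i)"
  define r where "r = \<gamma>min * c0 / W"
  have r0: "r > 0" unfolding r_def using gamma_min_pos c0 W0 by simp
  have Vmono: "- V T3 - r * T3 \<le> - V \<tau> - r * \<tau>" if "\<tau> \<ge> T3" for \<tau>
  proof (rule mono_deriv[where h' = "\<lambda>\<tau>. (\<Sum>i\<in>UNIV. gf i (opn \<tau> $ i) * x \<tau> $ i) - r", OF _ _ that])
    fix u assume u: "T3 \<le> u"
    have "((\<lambda>t. s t $ i + x t $ i) has_real_derivative (- gf i (opn u $ i) * x u $ i)) (at u within {T3..})" for i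
      using DERIV_add[OF vd_comp[OF subd[OF ds' T3(3)]] vd_comp[OF subd[OF dx' T3(3)]], of u i i] u T3 by simp
    then have Vd: "(V has_real_derivative (\<Sum>i\<in>UNIV. - gf i (opn u $ i) * x u $ i)) (at u within {T3..})"
      unfolding V_def by (intro DERIV_sum) auto
    have dr: "((\<lambda>\<tau>. r * \<tau>) has_real_derivative r) (at u within {T3..})"
      by (auto intro!: derivative_eq_intros)
    have "((\<lambda>\<tau>. - V \<tau> - r * \<tau>) has_real_derivative (- (\<Sum>i\<in>UNIV. - gf i (opn u $ i) * x u $ i) - r)) (at u within {T3..})"
      using DERIV_diff[OF DERIV_minus[OF Vd] dr] by simp
    then show "((\<lambda>\<tau>. - V \<tau> - r * \<tau>) has_real_derivative (\<Sum>i\<in>UNIV. gf i (opn u $ i) * x u $ i) - r) (at u within {T3..})"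
      by (simp add: sum_negf)
    have u0: "u \<ge> 0" using u T3 by simp
    have "(\<Sum>i\<in>UNIV. gf i (opn u $ i) * x u $ i) \<ge> (\<Sum>i\<in>UNIV. \<gamma>min * x u $ i)"
      by (rule sum_mono) (use gf_ge o_nonneg x_nonneg u0 in \<open>auto intro: mult_right_mono\<close>)
    also have "(\<Sum>i\<in>UNIV. \<gamma>min * x u $ i) = \<gamma>min * (\<Sum>i\<in>UNIV. x u $ i)" by (simp add: sum_distrib_left)
    also have "\<gamma>min * (\<Sum>i\<in>UNIV. x u $ i) \<ge> \<gamma>min * (c0 / W)"
    proof -
      have "c0 \<le> W * (\<Sum>i\<in>UNIV. x u $ i)" using ylb[OF u] yW[OF u0] by linarith
      then have "c0 / W \<le> (\<Sum>i\<in>UNIV. x u $ i)" using W0 by (simp add: divide_le_eq mult.commute)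
      then show ?thesis using gamma_min_pos by (intro mult_left_mono) auto
    qed
    finally show "(\<Sum>i\<in>UNIV. gf i (opn u $ i) * x u $ i) - r \<ge> 0" unfolding r_def by simp
  qed
  define \<tau>1 where "\<tau>1 = T3 + (V T3 + 1) / r"
  have V0: "V \<tau> \<ge> 0" if "\<tau> \<ge> 0" for \<tau>
    unfolding V_def by (rule sum_nonneg) (use s_nonneg x_nonneg that in \<open>auto intro: add_nonneg_nonneg\<close>)
  have VT3: "V T3 \<ge> 0" using V0 T3 by simp
  have t1: "\<tau>1 \<ge> T3" unfolding \<tau>1_def using VT3 r0 by simp
  have "V \<tau>1 \<le> V T3 - r * (\<tau>1 - T3)" using Vmono[OF t1] by (simp add: algebra_simps)
  also have "r * (\<tau>1 - T3) = V T3 + 1" unfolding \<tau>1_def using r0 by simp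
  finally have "V \<tau>1 \<le> -1" by simp
  moreover have "V \<tau>1 \<ge> 0" using V0 t1 T3 by simp
  ultimately show False by simp
qed

end


context sirm begin

lemma Q_tendsto: "((\<lambda>\<tau>. Q \<tau> i j) \<longlongrightarrow> Qe i j) at_top"
  unfolding Q_def Qe_def bf_def gf_def
  by (cases "j \<in> nbrs \<beta> i"; cases "i = j"; simp;
      intro tendsto_diff tendsto_add tendsto_mult tendsto_const s_tendsto_i o_tendsto_i)

lemma Qh_tendsto: "((\<lambda>\<tau>. Qh \<tau> i j) \<longlongrightarrow> Ah i j) at_top"
  unfolding Qh_def Ah_def by (cases "i \<notin> Z \<and> j \<notin> Z") (auto intro: Q_tendsto)

lemma Ah_offd: "i \<noteq> j \<Longrightarrow> Ah i j \<ge> 0"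
proof -
  assume ij: "i \<noteq> j"
  show ?thesis
  proof (cases "i \<notin> Z \<and> j \<notin> Z \<and> j \<in> nbrs \<beta> i")
    case True
    have "bf i j (oe $ i) \<ge> 0" using bf_ge[OF _ oe_le1[of i], of j] True beta_min_pos by force
    then show ?thesis using True ij se_nonneg[of i] by (simp add: Ah_def Qe_def)
  qed (use ij in \<open>auto simp: Ah_def Qe_def\<close>)
qed

lemma exp_tendsto0:
  fixes \<epsilon> C :: real
  assumes e: "\<epsilon> > 0" and C: "C \<ge> 0"
  shows "((\<lambda>t. C * exp (- \<epsilon> * t)) \<longlongrightarrow> 0) at_top"
proof (rule order_tendstoI)
  fix a :: real assume a: "a < 0"
  have "\<forall>t. a < C * exp (- \<epsilon> * t)"
  proof
    fix t have "C * exp (- \<epsilon> * t) \<ge> 0" using C by simp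
    then show "a < C * exp (- \<epsilon> * t)" using a by linarith
  qed
  then show "eventually (\<lambda>t. a < C * exp (- \<epsilon> * t)) at_top" by (rule always_eventually)
next
  fix a :: real assume "0 < a"
  then show "eventually (\<lambda>t. C * exp (- \<epsilon> * t) < a) at_top"
    using exp_small[of a \<epsilon> C 0] e by simp
qed

lemma main_result:
  "\<exists>se :: real^'n. (\<forall>i. se $ i \<in> {0..1}) \<and>
           (s \<longlongrightarrow> se) at_top \<and> (x \<longlongrightarrow> 0) at_top \<and>
           (opn \<longlongrightarrow> matrix_inv (laplacian abar + mat 1) *v (1 - se)) at_top \<and>
           (\<exists>C \<alpha>. \<alpha> > 0 \<and> (\<forall>t\<ge>0.
              norm (s t - se) + norm (x t)
              + norm (opn t - matrix_inv (laplacian abar + mat 1) *v (1 - se))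
              \<le> C * exp (- \<alpha> * t)))"
proof -
  obtain t0 T where tT: "0 \<le> t0" "t0 \<le> T" "\<forall>j\<in>Z. \<forall>\<tau>\<ge>t0. x \<tau> $ j = 0"
      "\<forall>j. j \<notin> Z \<longrightarrow> (\<forall>\<tau>\<ge>T. x \<tau> $ j > 0)"
    using Z_times by blast
  have "\<exists>v::real^'n. (\<forall>i. v$i \<ge> 0) \<and> (\<forall>i. (\<Sum>j\<in>UNIV. Ah i j * v$j) < 0)"
  proof (rule ccontr)
    assume "\<not> ?thesis"
    from ville[OF this] obtain w :: "real^'n" where "\<forall>i. w$i \<ge> 0" "w \<noteq> 0" "\<forall>j. (\<Sum>i\<in>UNIV. w$i * Ah i j) \<ge> 0"
      by blast
    then show False using branch2[OF tT] by blast
  qed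
  then obtain v :: "real^'n" where v0: "\<And>i. v$i \<ge> 0" and vneg: "\<And>i. (\<Sum>j\<in>UNIV. Ah i j * v$j) < 0"
    by blast
  have vpos: "v $ i > 0" for i
  proof (rule ccontr)
    assume "\<not> v $ i > 0"
    then have vi: "v $ i = 0" using v0[of i] by simp
    have "(\<Sum>j\<in>UNIV. Ah i j * v$j) \<ge> 0"
    proof (rule sum_nonneg)
      fix j show "Ah i j * v $ j \<ge> 0"
        by (cases "i = j") (use vi Ah_offd v0 in auto)
    qed
    then show False using vneg[of i] by simp
  qed
  define f where "f = (\<lambda>i. - (\<Sum>j\<in>UNIV. Ah i j * v$j) / (2 * v $ i))"
  have fpos: "f i > 0" for i unfolding f_def using vneg[of i] vpos[of i] by (simp add: divide_neg_pos)
  define m where "m = Min (range f)"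
  have m_in: "m \<in> range f" unfolding m_def by (rule Min_in) auto
  have m_le: "m \<le> f i" for i unfolding m_def by (rule Min_le) auto
  have m0: "m > 0" using m_in fpos by auto
  define \<epsilon> where "\<epsilon> = min (1/2) m"
  have eps: "\<epsilon> > 0" "\<epsilon> \<le> 1/2" unfolding \<epsilon>_def using m0 by auto
  have Ahv: "(\<Sum>j\<in>UNIV. Ah i j * v$j) \<le> - 2 * \<epsilon> * v $ i" for i
  proof -
    have "\<epsilon> \<le> f i" using m_le[of i] unfolding \<epsilon>_def by simp
    then have "\<epsilon> * (2 * v $ i) \<le> f i * (2 * v $ i)" using vpos[of i] by (intro mult_right_mono) auto
    also have "f i * (2 * v $ i) = - (\<Sum>j\<in>UNIV. Ah i j * v$j)" unfolding f_def using vpos[of i] by simp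
    finally have "\<epsilon> * (2 * v $ i) \<le> - (\<Sum>j\<in>UNIV. Ah i j * v$j)" .
    then show ?thesis by (simp add: algebra_simps)
  qed
  have "eventually (\<lambda>\<tau>. \<forall>i. (\<Sum>j\<in>UNIV. Qh \<tau> i j * v$j) < - \<epsilon> * v $ i) at_top"
  proof (rule eventually_all_finite)
    fix i
    have lim: "((\<lambda>\<tau>. \<Sum>j\<in>UNIV. Qh \<tau> i j * v$j) \<longlongrightarrow> (\<Sum>j\<in>UNIV. Ah i j * v$j)) at_top"
      by (intro tendsto_sum tendsto_mult Qh_tendsto tendsto_const)
    have "(\<Sum>j\<in>UNIV. Ah i j * v$j) < - \<epsilon> * v $ i" 
    proof -
      have p: "\<epsilon> * v $ i > 0" using eps vpos[of i] by simp
      have "- 2 * \<epsilon> * v $ i = - 2 * (\<epsilon> * v $ i)" "- \<epsilon> * v $ i = - (\<epsilon> * v $ i)" by simp_all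
      then show ?thesis using Ahv[of i] p by linarith
    qed
    then show "eventually (\<lambda>\<tau>. (\<Sum>j\<in>UNIV. Qh \<tau> i j * v$j) < - \<epsilon> * v $ i) at_top"
      by (rule order_tendstoD(2)[OF lim])
  qed
  then obtain T1' where T1': "\<And>\<tau> i. \<tau> \<ge> T1' \<Longrightarrow> (\<Sum>j\<in>UNIV. Qh \<tau> i j * v$j) < - \<epsilon> * v $ i"
    unfolding eventually_at_top_linorder by blast
  define T1 where "T1 = max T1' t0"
  have T1: "T1 \<ge> t0" "T1 \<ge> 0" "T1 \<ge> T1'" unfolding T1_def using tT by auto
  have negv: "(\<Sum>j\<in>UNIV. Qh \<tau> i j * v$j) \<le> - \<epsilon> * v $ i" if "\<tau> \<ge> T1" for \<tau> i
  proof -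
    have "\<tau> \<ge> T1'" using that T1 by simp
    from T1'[OF this, of i] show ?thesis by simp
  qed
  obtain C where C0: "C \<ge> 0" and Cb: "\<And>\<tau> i. \<tau> \<ge> T1 \<Longrightarrow> x \<tau> $ i \<le> C * exp (- \<epsilon> * (\<tau> - T1)) * v $ i"
    using branch1[OF tT(1,3) T1(1) vpos eps(1) negv] by blast

  define E where "E = (\<lambda>\<tau>. exp (- \<epsilon> * (\<tau> - T1)))"
  have Epos: "E \<tau> > 0" for \<tau> unfolding E_def by simp
  have E_ge1: "E \<tau> \<ge> 1" if "\<tau> \<le> T1" for \<tau>
  proof -
    have "\<epsilon> * (\<tau> - T1) \<le> 0" using that eps by (intro mult_nonneg_nonpos) auto
    then show ?thesis unfolding E_def by simp
  qed
  have exp_le_E: "exp (- \<tau>) \<le> E \<tau>" if "\<tau> \<ge> 0" for \<tau>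
  proof -
    have "(1 - \<epsilon>) * \<tau> \<ge> 0" using that eps by simp
    moreover have "\<epsilon> * T1 \<ge> 0" using T1 eps by simp
    ultimately have "- \<tau> \<le> - \<epsilon> * (\<tau> - T1)" by (simp add: algebra_simps)
    then show ?thesis unfolding E_def by simp
  qed
  have E_split: "E \<tau> = exp (\<epsilon> * T1) * exp (- \<epsilon> * \<tau>)" for \<tau>
    unfolding E_def by (simp add: exp_add[symmetric] algebra_simps)
  define Vs where "Vs = (\<Sum>i\<in>UNIV. v $ i)"
  have Vs0: "Vs \<ge> 0" unfolding Vs_def by (rule sum_nonneg) (use v0 in auto)
  have xsum: "(\<Sum>i\<in>UNIV. x \<tau> $ i) \<le> C * Vs * E \<tau>" if "\<tau> \<ge> T1" for \<tau>
  proof -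
    have "(\<Sum>i\<in>UNIV. x \<tau> $ i) \<le> (\<Sum>i\<in>UNIV. C * E \<tau> * v $ i)"
      by (rule sum_mono) (use Cb[OF that] in \<open>simp add: E_def mult.commute mult.left_commute\<close>)
    also have "\<dots> = C * Vs * E \<tau>" unfolding Vs_def by (simp add: sum_distrib_left[symmetric] algebra_simps)
    finally show ?thesis .
  qed
  have bsum0: "bsum \<ge> 0" using beta_le_bsum[of undefined undefined] beta_nonneg[of undefined undefined] by simp
  have Fb: "F \<tau> i \<le> bsum * (\<Sum>j\<in>UNIV. x \<tau> $ j)" if "\<tau> \<ge> 0" for \<tau> i
  proof -
    have "F \<tau> i \<le> (\<Sum>j\<in>nbrs \<beta> i. bsum * x \<tau> $ j)" unfolding F_def
    proof (rule sum_mono)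
      fix j assume j: "j \<in> nbrs \<beta> i"
      have "bf i j (opn \<tau> $ i) \<le> bsum" using bf_le[OF j o_nonneg[OF that, of i]] beta_le_bsum[of i j] by linarith
      then show "bf i j (opn \<tau> $ i) * x \<tau> $ j \<le> bsum * x \<tau> $ j" using x_nonneg[OF that, of j] by (rule mult_right_mono)
    qed
    also have "\<dots> \<le> (\<Sum>j\<in>UNIV. bsum * x \<tau> $ j)"
      by (rule sum_mono2) (use bsum0 x_nonneg[OF that] in auto)
    also have "\<dots> = bsum * (\<Sum>j\<in>UNIV. x \<tau> $ j)" by (simp add: sum_distrib_left)
    finally show ?thesis .
  qed
  define A where "A = bsum * C * Vs / \<epsilon>"
  have A0: "A \<ge> 0" unfolding A_def using bsum0 C0 Vs0 eps by simp
  have sb: "s \<tau> $ i - se $ i \<le> A * E \<tau>" if tau: "\<tau> \<ge> T1" for \<tau> i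
  proof -
    define h where "h = (\<lambda>\<sigma>. s \<sigma> $ i - A * E \<sigma>)"
    have tau0: "\<tau> \<ge> 0" using tau T1 by simp
    have hmono: "h \<tau> \<le> h \<sigma>" if "\<sigma> \<ge> \<tau>" for \<sigma>
    proof (rule mono_deriv[where h' = "\<lambda>u. - s u $ i * F u i + A * (\<epsilon> * E u)", OF _ _ that])
      fix u assume u: "\<tau> \<le> u"
      have d1: "((\<lambda>t. s t $ i) has_real_derivative - s u $ i * F u i) (at u within {\<tau>..})"
        using vd_comp[OF subd[OF ds' tau0], of u i] u tau0 by simp
      have d2: "(E has_real_derivative (- \<epsilon> * E u)) (at u within {\<tau>..})"
        unfolding E_def by (auto intro!: derivative_eq_intros)
      show "(h has_real_derivative - s u $ i * F u i + A * (\<epsilon> * E u)) (at u within {\<tau>..})"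
        unfolding h_def using DERIV_diff[OF d1 DERIV_cmult[OF d2, of A]] by simp
      have u0: "u \<ge> 0" "u \<ge> T1" using u tau tau0 by auto
      have "s u $ i * F u i \<le> 1 * F u i"
        using s_le1[OF u0(1), of i] F_nonneg[OF u0(1), of i] by (rule mult_right_mono)
      also have "\<dots> \<le> bsum * (\<Sum>j\<in>UNIV. x u $ j)" using Fb[OF u0(1)] by simp
      also have "\<dots> \<le> bsum * (C * Vs * E u)" using xsum[OF u0(2)] bsum0 by (rule mult_left_mono)
      also have "\<dots> = A * (\<epsilon> * E u)" unfolding A_def using eps by simp
      finally show "- s u $ i * F u i + A * (\<epsilon> * E u) \<ge> 0" by simp
    qed
    have "eventually (\<lambda>\<sigma>. h \<tau> \<le> s \<sigma> $ i) at_top"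
      using eventually_ge_at_top[of \<tau>]
    proof eventually_elim
      case (elim \<sigma>)
      have "h \<sigma> \<le> s \<sigma> $ i" unfolding h_def using A0 Epos[of \<sigma>] by simp
      then show ?case using hmono[OF elim] by linarith
    qed
    then have "h \<tau> \<le> se $ i" by (rule tendsto_lowerbound[OF s_tendsto_i]) simp
    then show ?thesis unfolding h_def by simp
  qed
  define Kl where "Kl = 2 * A + (\<Sum>j\<in>UNIV. \<bar>opn T1 $ j - oe $ j\<bar>)"
  have Kl_ge: "Kl \<ge> 2 * A" unfolding Kl_def by (simp add: sum_nonneg)
  have olow: "opn \<tau> $ i - oe $ i \<ge> - (Kl * E \<tau>)" if tau: "\<tau> \<ge> T1" for \<tau> i
  proof -
    have "opn \<tau> $ i - oe $ i \<ge> - (Kl * exp (- \<epsilon> * (\<tau> - T1)) + 0)"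
    proof (rule o_lower_gen[OF T1(2)])
      fix j
      have "\<bar>opn T1 $ j - oe $ j\<bar> \<le> (\<Sum>j\<in>UNIV. \<bar>opn T1 $ j - oe $ j\<bar>)" by (rule member_le_sum) auto
      then show "opn T1 $ j - oe $ j + Kl + 0 \<ge> 0" unfolding Kl_def using A0 by linarith
    next
      fix \<sigma> j assume s: "\<sigma> \<ge> T1"
      have "A \<le> (1 - \<epsilon>) * Kl"
      proof -
        have "(1 - \<epsilon>) * Kl \<ge> (1/2) * Kl" using eps Kl_ge A0 by (intro mult_right_mono) auto
        then show ?thesis using Kl_ge by linarith
      qed
      then have m: "A * E \<sigma> \<le> (1 - \<epsilon>) * Kl * E \<sigma>" using Epos[of \<sigma>] by (intro mult_right_mono) auto
      have "s \<sigma> $ j - se $ j \<le> (1 - \<epsilon>) * Kl * E \<sigma>" using sb[OF s, of j] m by linarith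
      then show "s \<sigma> $ j - se $ j \<le> (1 - \<epsilon>) * Kl * exp (- \<epsilon> * (\<sigma> - T1)) + 0"
        unfolding E_def by simp
    qed (use eps tau in auto)
    then show ?thesis unfolding E_def by simp
  qed
  define n where "n = real CARD('n)"
  have bs: "\<bar>s \<tau> $ i - se $ i\<bar> \<le> (A + 1) * E \<tau>" if "\<tau> \<ge> 0" for \<tau> i
  proof (cases "\<tau> \<ge> T1")
    case True
    then show ?thesis using sb[OF True, of i] se_le[OF that, of i] Epos[of \<tau>] by (simp add: algebra_simps)
  next
    case False
    have "\<bar>s \<tau> $ i - se $ i\<bar> \<le> 1" using s_le1[OF that, of i] se_le[OF that, of i] se_nonneg[of i] by simp
    also have "1 \<le> (A + 1) * E \<tau>"
    proof -
      have "1 * 1 \<le> (A + 1) * E \<tau>" by (rule mult_mono) (use A0 E_ge1[of \<tau>] False in auto)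
      then show ?thesis by simp
    qed
    finally show ?thesis .
  qed
  have bx: "\<bar>x \<tau> $ i\<bar> \<le> (C * v $ i + 1) * E \<tau>" if "\<tau> \<ge> 0" for \<tau> i
  proof (cases "\<tau> \<ge> T1")
    case True
    have "x \<tau> $ i \<le> C * v $ i * E \<tau>" using Cb[OF True, of i] unfolding E_def by (simp add: algebra_simps)
    then show ?thesis using x_nonneg[OF that, of i] Epos[of \<tau>] by (simp add: algebra_simps)
  next
    case False
    have "\<bar>x \<tau> $ i\<bar> \<le> 1" using x_le1[OF that, of i] x_nonneg[OF that, of i] by simp
    also have "1 \<le> E \<tau>" using E_ge1[of \<tau>] False by simp
    also have "E \<tau> \<le> (C * v $ i + 1) * E \<tau>" using C0 v0[of i] Epos[of \<tau>] by (simp add: algebra_simps)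
    finally show ?thesis .
  qed
  have bo: "\<bar>opn \<tau> $ i - oe $ i\<bar> \<le> (K0 + Kl + 1) * E \<tau>" if "\<tau> \<ge> 0" for \<tau> i
  proof (cases "\<tau> \<ge> T1")
    case True
    have "opn \<tau> $ i - oe $ i \<le> K0 * E \<tau>"
      using o_upper[OF that, of i] mult_left_mono[OF exp_le_E[OF that] K0_nonneg] by linarith
    moreover have "opn \<tau> $ i - oe $ i \<ge> - (Kl * E \<tau>)" by (rule olow[OF True])
    moreover have "K0 * E \<tau> \<ge> 0" "Kl * E \<tau> \<ge> 0" using K0_nonneg Kl_ge A0 Epos[of \<tau>] by simp_all
    ultimately show ?thesis using Epos[of \<tau>] by (simp add: algebra_simps abs_le_iff)
  next
    case False
    have "\<bar>opn \<tau> $ i - oe $ i\<bar> \<le> 1" using o_le1[OF that, of i] o_nonneg[OF that, of i] oe_le1[of i] oe_nonneg[of i] by simp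
    also have "1 \<le> E \<tau>" using E_ge1[of \<tau>] False by simp
    also have "E \<tau> \<le> (K0 + Kl + 1) * E \<tau>" using K0_nonneg Kl_ge A0 Epos[of \<tau>] by (simp add: algebra_simps)
    finally show ?thesis .
  qed
  define Ct where "Ct = n * (A + 1) + (C * Vs + n) + n * (K0 + Kl + 1)"
  have total: "norm (s \<tau> - se) + norm (x \<tau>) + norm (opn \<tau> - oe) \<le> Ct * E \<tau>" if "\<tau> \<ge> 0" for \<tau>
  proof -
    have "norm (s \<tau> - se) \<le> (\<Sum>i\<in>UNIV. \<bar>(s \<tau> - se) $ i\<bar>)" by (rule norm_le_l1_cart)
    also have "\<dots> \<le> (\<Sum>i\<in>(UNIV::'n set). (A + 1) * E \<tau>)" by (rule sum_mono) (use bs[OF that] in simp)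
    also have "\<dots> = n * (A + 1) * E \<tau>" by (simp add: n_def)
    finally have 1: "norm (s \<tau> - se) \<le> n * (A + 1) * E \<tau>" .
    have "norm (x \<tau>) \<le> (\<Sum>i\<in>UNIV. \<bar>x \<tau> $ i\<bar>)" by (rule norm_le_l1_cart)
    also have "\<dots> \<le> (\<Sum>i\<in>UNIV. (C * v $ i + 1) * E \<tau>)" by (rule sum_mono) (use bx[OF that] in simp)
    also have "\<dots> = (C * Vs + n) * E \<tau>"
      by (simp add: Vs_def n_def sum.distrib sum_distrib_left[symmetric] sum_distrib_right[symmetric] algebra_simps)
    finally have 2: "norm (x \<tau>) \<le> (C * Vs + n) * E \<tau>" .
    have "norm (opn \<tau> - oe) \<le> (\<Sum>i\<in>UNIV. \<bar>(opn \<tau> - oe) $ i\<bar>)" by (rule norm_le_l1_cart)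
    also have "\<dots> \<le> (\<Sum>i\<in>(UNIV::'n set). (K0 + Kl + 1) * E \<tau>)" by (rule sum_mono) (use bo[OF that] in simp)
    also have "\<dots> = n * (K0 + Kl + 1) * E \<tau>" by (simp add: n_def)
    finally have 3: "norm (opn \<tau> - oe) \<le> n * (K0 + Kl + 1) * E \<tau>" .
    have "Ct * E \<tau> = n * (A + 1) * E \<tau> + (C * Vs + n) * E \<tau> + n * (K0 + Kl + 1) * E \<tau>"
      unfolding Ct_def by (simp add: algebra_simps)
    then show ?thesis using 1 2 3 by linarith
  qed
  define C' where "C' = Ct * exp (\<epsilon> * T1)"
  have total': "norm (s \<tau> - se) + norm (x \<tau>) + norm (opn \<tau> - oe) \<le> C' * exp (- \<epsilon> * \<tau>)" if "\<tau> \<ge> 0" for \<tau>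
    using total[OF that] unfolding C'_def E_split by (simp add: mult.assoc)
  have n0: "n \<ge> 0" unfolding n_def by simp
  have "Ct \<ge> 0" unfolding Ct_def using n0 A0 C0 Vs0 K0_nonneg Kl_ge by simp
  then have C'0: "C' \<ge> 0" unfolding C'_def by simp
  have lim0: "((\<lambda>t. C' * exp (- \<epsilon> * t)) \<longlongrightarrow> 0) at_top" by (rule exp_tendsto0[OF eps(1) C'0])
  have ev: "eventually (\<lambda>t. norm (s t - se) + norm (x t) + norm (opn t - oe) \<le> C' * exp (- \<epsilon> * t)) at_top"
    using eventually_ge_at_top[of "0::real"] by eventually_elim (rule total')
  have ev1: "eventually (\<lambda>t. norm (s t - se) \<le> C' * exp (- \<epsilon> * t)) at_top"
    using ev
  proof eventually_elim
    case (elim t)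
    have "norm (x t) \<ge> 0" "norm (opn t - oe) \<ge> 0" by simp_all
    then show ?case using elim by linarith
  qed
  have ev2: "eventually (\<lambda>t. norm (x t) \<le> C' * exp (- \<epsilon> * t)) at_top"
    using ev
  proof eventually_elim
    case (elim t)
    have "norm (s t - se) \<ge> 0" "norm (opn t - oe) \<ge> 0" by simp_all
    then show ?case using elim by linarith
  qed
  have ev3: "eventually (\<lambda>t. norm (opn t - oe) \<le> C' * exp (- \<epsilon> * t)) at_top"
    using ev
  proof eventually_elim
    case (elim t)
    have "norm (s t - se) \<ge> 0" "norm (x t) \<ge> 0" by simp_all
    then show ?case using elim by linarith
  qed
  have "((\<lambda>t. s t - se) \<longlongrightarrow> 0) at_top"
    by (rule Lim_null_comparison[OF ev1 lim0])
  then have Ls: "(s \<longlongrightarrow> se) at_top" by (rule LIM_zero_cancel)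
  have Lx: "(x \<longlongrightarrow> 0) at_top"
    by (rule Lim_null_comparison[OF ev2 lim0])
  have "((\<lambda>t. opn t - oe) \<longlongrightarrow> 0) at_top"
    by (rule Lim_null_comparison[OF ev3 lim0])
  then have Lo: "(opn \<longlongrightarrow> oe) at_top" by (rule LIM_zero_cancel)
  have oe_eq: "oe = matrix_inv (laplacian abar + mat 1) *v (1 - se)" by (simp add: oe_def M_def)
  have final: "(\<forall>i. se $ i \<in> {0..1}) \<and>
           (s \<longlongrightarrow> se) at_top \<and> (x \<longlongrightarrow> 0) at_top \<and>
           (opn \<longlongrightarrow> matrix_inv (laplacian abar + mat 1) *v (1 - se)) at_top \<and>
           (\<exists>C \<alpha>. \<alpha> > 0 \<and> (\<forall>t\<ge>0.
              norm (s t - se) + norm (x t)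
              + norm (opn t - matrix_inv (laplacian abar + mat 1) *v (1 - se))
              \<le> C * exp (- \<alpha> * t)))"
    unfolding oe_eq[symmetric]
    using se_nonneg se_le1 Ls Lx Lo total' eps(1)
    by (intro conjI exI[of _ C'] exI[of _ \<epsilon>]) auto
  then show ?thesis by blast
qed

end

theorem theorem2:
  fixes \<beta> abar :: "'n::finite \<Rightarrow> 'n \<Rightarrow> real"
    and \<gamma> :: "'n \<Rightarrow> real"
    and \<beta>min \<gamma>min :: real
    and s x opn :: "real \<Rightarrow> real^'n"
  assumes beta_nonneg: "\<And>i j. \<beta> i j \<ge> 0"
    and beta_min_pos: "\<beta>min > 0"
    and beta_ge: "\<And>i j. j \<in> nbrs \<beta> i \<Longrightarrow> \<beta> i j \<ge> \<beta>min"
    and gamma_min_pos: "\<gamma>min > 0"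
    and gamma_ge: "\<And>i. \<gamma> i \<ge> \<gamma>min"
    and abar_nonneg: "\<And>i j. abar i j \<ge> 0"
    and G_sc: "strongly_connected \<beta>"
    and Gbar_sc: "strongly_connected abar"
    and s0: "\<And>i. s 0 $ i \<in> {0..1}"
    and x0: "\<And>i. x 0 $ i \<in> {0..1}"
    and o0: "\<And>i. opn 0 $ i \<in> {0..1}"
    and sx0: "\<And>i. s 0 $ i + x 0 $ i \<le> 1"
    and ds: "\<And>t. t \<ge> 0 \<Longrightarrow> (s has_vector_derivative
              (\<chi> i. - s t $ i * (\<Sum>j\<in>nbrs \<beta> i. (\<beta> i j - (\<beta> i j - \<beta>min) * opn t $ i) * x t $ j)))
              (at t within {0..})"
    and dx: "\<And>t. t \<ge> 0 \<Longrightarrow> (x has_vector_derivative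
              (\<chi> i. s t $ i * (\<Sum>j\<in>nbrs \<beta> i. (\<beta> i j - (\<beta> i j - \<beta>min) * opn t $ i) * x t $ j)
                     - (\<gamma>min + (\<gamma> i - \<gamma>min) * opn t $ i) * x t $ i))
              (at t within {0..})"
    and do: "\<And>t. t \<ge> 0 \<Longrightarrow> (opn has_vector_derivative
              ((1 - s t) - (laplacian abar + mat 1) *v opn t))
              (at t within {0..})"
  shows "\<exists>se :: real^'n. (\<forall>i. se $ i \<in> {0..1}) \<and>
           (s \<longlongrightarrow> se) at_top \<and> (x \<longlongrightarrow> 0) at_top \<and>
           (opn \<longlongrightarrow> matrix_inv (laplacian abar + mat 1) *v (1 - se)) at_top \<and>
           (\<exists>C \<alpha>. \<alpha> > 0 \<and> (\<forall>t\<ge>0.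
              norm (s t - se) + norm (x t)
              + norm (opn t - matrix_inv (laplacian abar + mat 1) *v (1 - se))
              \<le> C * exp (- \<alpha> * t)))"
  proof -
  interpret sirm \<beta> abar \<gamma> \<beta>min \<gamma>min s x opn
    by (rule sirm.intro[OF beta_nonneg beta_min_pos beta_ge gamma_min_pos gamma_ge abar_nonneg s0 x0 o0 sx0 ds dx do])
  show ?thesis by (rule main_result)
qed

end
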